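(* Let $(\Theta,d)$ be a totally bounded semimetric space with diameter $\Delta$, and let $X=(X^\theta)_{\theta\in\Theta}$ be a nearly sub-Gaussian random field w.r.t. $d$ on a probability space $(\overline\Omega,\overline{\mathcal F},\overline{\mathrm P})$. If $\mathcal D(\Delta,d)<\infty$, then $X$ admits a separable version, and each separable version of $X$ has $\overline{\mathrm P}$-almost surely bounded and $d$-uniformly continuous paths. Moreover, for any separable version $\widehat X$ of $X$ and every $\overline\theta\in\Theta$ there is a random variable $U^{\overline\theta}$ on $(\overline\Omega,\overline{\mathcal F},\overline{\mathrm P})$ such that $\sup_{\theta\in\Theta}\widehat X^\theta\le U^{\overline\theta}+\widehat X^{\overline\theta}$ $\overline{\mathrm P}$-a.s. and $\mathbb E_{\overline{\mathrm P}}[\exp(pU^{\overline\theta})]<\infty$ for every $p\in(0,\infty)$.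
   Context: A centered stochastic process $(X^\theta)_{\theta\in\Theta}$ is a nearly sub-Gaussian random field w.r.t. $d$ if there is $C\ge1$ such that $\mathbb E[\exp(\lambda(X^\theta-X^\vartheta))]\le C\exp(\lambda^2d(\theta,\vartheta)^2/2)$ for all $\theta,\vartheta\in\Theta$ and $\lambda>0$. $N(\Theta,d;\varepsilon)$ denotes the minimal number of $\varepsilon$-balls w.r.t. $d$ needed to cover $\Theta$, and $\mathcal D(\delta,d)=\int_0^\delta\sqrt{\ln N(\Theta,d;\varepsilon)}\,d\varepsilon$. *)

theory Defs
  imports "HOL-Probability.Probability"
begin

definition semimetric_on :: "'b set \<Rightarrow> ('b \<Rightarrow> 'b \<Rightarrow> real) \<Rightarrow> bool" where
  "semimetric_on \<Theta> d \<longleftrightarrow>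
     (\<forall>s\<in>\<Theta>. \<forall>t\<in>\<Theta>. 0 \<le> d s t \<and> d s t = d t s) \<and> (\<forall>s\<in>\<Theta>. d s s = 0) \<and>
     (\<forall>r\<in>\<Theta>. \<forall>s\<in>\<Theta>. \<forall>t\<in>\<Theta>. d r t \<le> d r s + d s t)"

definition totally_bounded_wrt :: "'b set \<Rightarrow> ('b \<Rightarrow> 'b \<Rightarrow> real) \<Rightarrow> bool" where
  "totally_bounded_wrt \<Theta> d \<longleftrightarrow>
     (\<forall>\<epsilon>>0. \<exists>F. finite F \<and> F \<subseteq> \<Theta> \<and> \<Theta> \<subseteq> (\<Union>c\<in>F. {t. d c t < \<epsilon>}))"

definition diameter_wrt :: "'b set \<Rightarrow> ('b \<Rightarrow> 'b \<Rightarrow> real) \<Rightarrow> real" where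
  "diameter_wrt \<Theta> d = Sup {d s t | s t. s \<in> \<Theta> \<and> t \<in> \<Theta>}"

definition covering_number :: "'b set \<Rightarrow> ('b \<Rightarrow> 'b \<Rightarrow> real) \<Rightarrow> real \<Rightarrow> nat" where
  "covering_number \<Theta> d \<epsilon> =
     (LEAST n. \<exists>F. finite F \<and> card F = n \<and> F \<subseteq> \<Theta> \<and> \<Theta> \<subseteq> (\<Union>c\<in>F. {t. d c t < \<epsilon>}))"

definition dudley_integral :: "'b set \<Rightarrow> ('b \<Rightarrow> 'b \<Rightarrow> real) \<Rightarrow> real \<Rightarrow> ennreal" where
  "dudley_integral \<Theta> d \<delta> =
     (\<integral>\<^sup>+ \<epsilon>. indicator {0<..\<delta>} \<epsilon> * ennreal (sqrt (ln (real (covering_number \<Theta> d \<epsilon>)))) \<partial>lborel)"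

definition nearly_subgaussian ::
  "'a measure \<Rightarrow> 'b set \<Rightarrow> ('b \<Rightarrow> 'b \<Rightarrow> real) \<Rightarrow> ('b \<Rightarrow> 'a \<Rightarrow> real) \<Rightarrow> bool" where
  "nearly_subgaussian M \<Theta> d X \<longleftrightarrow>
     (\<forall>\<theta>\<in>\<Theta>. integrable M (X \<theta>) \<and> integral\<^sup>L M (X \<theta>) = 0) \<and>
     (\<exists>C\<ge>1. \<forall>\<theta>\<in>\<Theta>. \<forall>\<phi>\<in>\<Theta>. \<forall>l>0.
        (\<integral>\<^sup>+ \<omega>. ennreal (exp (l * (X \<theta> \<omega> - X \<phi> \<omega>))) \<partial>M)
          \<le> ennreal (C * exp (l\<^sup>2 * (d \<theta> \<phi>)\<^sup>2 / 2)))"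

definition is_version ::
  "'a measure \<Rightarrow> 'b set \<Rightarrow> ('b \<Rightarrow> 'a \<Rightarrow> real) \<Rightarrow> ('b \<Rightarrow> 'a \<Rightarrow> real) \<Rightarrow> bool" where
  "is_version M \<Theta> X Y \<longleftrightarrow>
     (\<forall>\<theta>\<in>\<Theta>. Y \<theta> \<in> borel_measurable M \<and> (AE \<omega> in M. Y \<theta> \<omega> = X \<theta> \<omega>))"

definition separable_field ::
  "'a measure \<Rightarrow> 'b set \<Rightarrow> ('b \<Rightarrow> 'b \<Rightarrow> real) \<Rightarrow> ('b \<Rightarrow> 'a \<Rightarrow> real) \<Rightarrow> bool" where
  "separable_field M \<Theta> d Y \<longleftrightarrow>
     (\<exists>T N. countable T \<and> T \<subseteq> \<Theta> \<and> N \<in> null_sets M \<and>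
        (\<forall>\<omega>\<in>space M - N. \<forall>\<theta>\<in>\<Theta>. \<forall>\<epsilon>>0.
           Y \<theta> \<omega> \<in> closure {Y t \<omega> | t. t \<in> T \<and> d t \<theta> < \<epsilon>}))"

definition uniformly_continuous_wrt :: "'b set \<Rightarrow> ('b \<Rightarrow> 'b \<Rightarrow> real) \<Rightarrow> ('b \<Rightarrow> real) \<Rightarrow> bool" where
  "uniformly_continuous_wrt \<Theta> d f \<longleftrightarrow>
     (\<forall>\<epsilon>>0. \<exists>\<delta>>0. \<forall>s\<in>\<Theta>. \<forall>t\<in>\<Theta>. d s t < \<delta> \<longrightarrow> \<bar>f s - f t\<bar> < \<epsilon>)"

end

theory Submission
  imports Defs
begin

lemma jensen_exp_weights:
  fixes a x :: "nat \<Rightarrow> real"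
  assumes a0: "\<And>m. 0 \<le> a m" and s1: "sum a {..<N} \<le> 1"
  shows "exp (\<Sum>m<N. a m * x m) \<le> (1 - sum a {..<N}) + (\<Sum>m<N. a m * exp (x m))"
proof -
  define a' where "a' m = (if m < N then a m else 1 - sum a {..<N})" for m
  define y where "y m = (if m < N then x m else 0)" for m
  have cv: "convex_on UNIV exp" using convex_on_exp[of 1] by simp
  have sum1: "sum a' {..N} = 1"
    by (simp add: a'_def lessThan_Suc_atMost[symmetric])
  have "exp (\<Sum>i\<in>{..N}. a' i *\<^sub>R y i) \<le> (\<Sum>i\<in>{..N}. a' i * exp (y i))"
    by (rule convex_on_sum[OF _ _ cv sum1]) (use a0 s1 in \<open>auto simp: a'_def\<close>)
  moreover have "(\<Sum>i\<in>{..N}. a' i *\<^sub>R y i) = (\<Sum>m<N. a m * x m)"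
    by (simp add: lessThan_Suc_atMost[symmetric] a'_def y_def)
  moreover have "(\<Sum>i\<in>{..N}. a' i * exp (y i)) = (1 - sum a {..<N}) + (\<Sum>m<N. a m * exp (x m))"
    by (simp add: lessThan_Suc_atMost[symmetric] a'_def y_def)
  ultimately show ?thesis by simp
qed


lemma level_bound:
  fixes Z :: "'q \<Rightarrow> 'a \<Rightarrow> real"
  assumes M: "prob_space M" and fin: "finite Q" and ne: "Q \<noteq> {}"
    and meas: "\<And>q. q \<in> Q \<Longrightarrow> Z q \<in> borel_measurable M"
    and C: "C \<ge> 1" and lam: "lam > 0"
    and mgf1: "\<And>q. q \<in> Q \<Longrightarrow> (\<integral>\<^sup>+\<omega>. ennreal (exp (lam * Z q \<omega>)) \<partial>M) \<le> ennreal (C * exp (lam\<^sup>2 * s\<^sup>2 / 2))"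
    and mgf2: "\<And>q. q \<in> Q \<Longrightarrow> (\<integral>\<^sup>+\<omega>. ennreal (exp (lam * - Z q \<omega>)) \<partial>M) \<le> ennreal (C * exp (lam\<^sup>2 * s\<^sup>2 / 2))"
    and cdef: "c = lam * s\<^sup>2 / 2 + (ln (2 * C * real (card Q)) + 1) / lam"
  shows "(\<integral>\<^sup>+\<omega>. ennreal (exp (lam * max 0 ((MAX q\<in>Q. \<bar>Z q \<omega>\<bar>) - c))) \<partial>M) \<le> 2"
proof -
  interpret prob_space M by fact
  define g where "g q \<omega> = exp (lam * (Z q \<omega> - c)) + exp (lam * (- Z q \<omega> - c))" for q \<omega>
  have gnn: "0 \<le> g q \<omega>" for q \<omega> by (simp add: g_def add_nonneg_nonneg)
  have pw: "exp (lam * max 0 ((MAX q\<in>Q. \<bar>Z q \<omega>\<bar>) - c)) \<le> 1 + (\<Sum>q\<in>Q. g q \<omega>)" for \<omega>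
  proof (cases "(MAX q\<in>Q. \<bar>Z q \<omega>\<bar>) \<le> c")
    case True
    then show ?thesis using gnn by (simp add: sum_nonneg)
  next
    case False
    have "(MAX q\<in>Q. \<bar>Z q \<omega>\<bar>) \<in> (\<lambda>q. \<bar>Z q \<omega>\<bar>) ` Q"
      using fin ne by (intro Max_in) auto
    then obtain q where q: "q \<in> Q" "(MAX q\<in>Q. \<bar>Z q \<omega>\<bar>) = \<bar>Z q \<omega>\<bar>"
      by auto
    have "exp (lam * max 0 ((MAX q\<in>Q. \<bar>Z q \<omega>\<bar>) - c)) = exp (lam * (\<bar>Z q \<omega>\<bar> - c))"
      using False q by simp
    also have "\<dots> \<le> g q \<omega>"
      by (cases "Z q \<omega> \<ge> 0") (auto simp: g_def add_increasing add_increasing2)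
    also have "\<dots> \<le> (\<Sum>q\<in>Q. g q \<omega>)"
      by (rule member_le_sum) (use q gnn fin in auto)
    finally show ?thesis by simp
  qed
  have gmeas: "q \<in> Q \<Longrightarrow> (\<lambda>\<omega>. ennreal (g q \<omega>)) \<in> borel_measurable M" for q
    using meas[of q] unfolding g_def by measurable
  have gint: "(\<integral>\<^sup>+\<omega>. ennreal (g q \<omega>) \<partial>M) \<le> ennreal (2 * C * exp (lam\<^sup>2 * s\<^sup>2 / 2 - lam * c))"
    if q: "q \<in> Q" for q
  proof -
    have m1: "(\<lambda>\<omega>. ennreal (exp (lam * Z q \<omega>))) \<in> borel_measurable M"
      using meas[OF q] by measurable
    have m2: "(\<lambda>\<omega>. ennreal (exp (lam * - Z q \<omega>))) \<in> borel_measurable M"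
      using meas[OF q] by measurable
    have eq: "ennreal (g q \<omega>) = ennreal (exp (- lam * c)) * ennreal (exp (lam * Z q \<omega>))
          + ennreal (exp (- lam * c)) * ennreal (exp (lam * - Z q \<omega>))" for \<omega>
      by (simp add: g_def ennreal_mult'[symmetric] ennreal_plus[symmetric] exp_add[symmetric]
            algebra_simps del: ennreal_plus)
    have "(\<integral>\<^sup>+\<omega>. ennreal (g q \<omega>) \<partial>M) = ennreal (exp (- lam * c)) * (\<integral>\<^sup>+\<omega>. ennreal (exp (lam * Z q \<omega>)) \<partial>M)
        + ennreal (exp (- lam * c)) * (\<integral>\<^sup>+\<omega>. ennreal (exp (lam * - Z q \<omega>)) \<partial>M)"
      unfolding eq using m1 m2 by (simp add: nn_integral_add nn_integral_cmult)
    also have "\<dots> \<le> ennreal (exp (- lam * c)) * ennreal (C * exp (lam\<^sup>2 * s\<^sup>2 / 2))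
        + ennreal (exp (- lam * c)) * ennreal (C * exp (lam\<^sup>2 * s\<^sup>2 / 2))"
      by (intro add_mono mult_left_mono mgf1 mgf2 q) auto
    also have "\<dots> = ennreal (2 * C * exp (lam\<^sup>2 * s\<^sup>2 / 2 - lam * c))"
    proof -
      have "exp (- lam * c) * (C * exp (lam\<^sup>2 * s\<^sup>2 / 2)) + exp (- lam * c) * (C * exp (lam\<^sup>2 * s\<^sup>2 / 2))
          = 2 * C * exp (lam\<^sup>2 * s\<^sup>2 / 2 - lam * c)"
      proof -
        have "exp (- lam * c) * exp (lam\<^sup>2 * s\<^sup>2 / 2) = exp (- lam * c + lam\<^sup>2 * s\<^sup>2 / 2)"
          by (rule exp_add[symmetric])
        also have "- lam * c + lam\<^sup>2 * s\<^sup>2 / 2 = lam\<^sup>2 * s\<^sup>2 / 2 - lam * c" by simp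
        finally show ?thesis by (simp add: algebra_simps)
      qed
      then show ?thesis
        using C by (simp add: ennreal_mult'[symmetric] ennreal_plus[symmetric] del: ennreal_plus)
    qed
    finally show ?thesis .
  qed
  have "(\<integral>\<^sup>+\<omega>. ennreal (exp (lam * max 0 ((MAX q\<in>Q. \<bar>Z q \<omega>\<bar>) - c))) \<partial>M)
      \<le> (\<integral>\<^sup>+\<omega>. (1 + (\<Sum>q\<in>Q. ennreal (g q \<omega>))) \<partial>M)"
  proof (intro nn_integral_mono)
    fix \<omega>
    have "ennreal (exp (lam * max 0 ((MAX q\<in>Q. \<bar>Z q \<omega>\<bar>) - c))) \<le> ennreal (1 + (\<Sum>q\<in>Q. g q \<omega>))"
      using pw by (rule ennreal_leI)
    also have "\<dots> = 1 + (\<Sum>q\<in>Q. ennreal (g q \<omega>))"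
      using gnn by (simp add: sum_nonneg sum_ennreal)
    finally show "ennreal (exp (lam * max 0 ((MAX q\<in>Q. \<bar>Z q \<omega>\<bar>) - c))) \<le> 1 + (\<Sum>q\<in>Q. ennreal (g q \<omega>))" .
  qed
  also have "\<dots> = 1 + (\<Sum>q\<in>Q. \<integral>\<^sup>+\<omega>. ennreal (g q \<omega>) \<partial>M)"
    using gmeas by (simp add: nn_integral_add nn_integral_sum emeasure_space_1)
  also have "\<dots> \<le> 1 + (\<Sum>q\<in>Q. ennreal (2 * C * exp (lam\<^sup>2 * s\<^sup>2 / 2 - lam * c)))"
    by (intro add_left_mono sum_mono gint)
  also have "\<dots> = ennreal (1 + real (card Q) * (2 * C * exp (lam\<^sup>2 * s\<^sup>2 / 2 - lam * c)))"
  proof -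
    have nn: "0 \<le> 2 * C * exp (lam\<^sup>2 * s\<^sup>2 / 2 - lam * c)" using C by simp
    have "(\<Sum>q\<in>Q. ennreal (2 * C * exp (lam\<^sup>2 * s\<^sup>2 / 2 - lam * c)))
        = ennreal (\<Sum>q\<in>Q. 2 * C * exp (lam\<^sup>2 * s\<^sup>2 / 2 - lam * c))"
      using nn by (rule sum_ennreal)
    also have "\<dots> = ennreal (real (card Q) * (2 * C * exp (lam\<^sup>2 * s\<^sup>2 / 2 - lam * c)))"
      by simp
    finally have E: "(\<Sum>q\<in>Q. ennreal (2 * C * exp (lam\<^sup>2 * s\<^sup>2 / 2 - lam * c)))
       = ennreal (real (card Q) * (2 * C * exp (lam\<^sup>2 * s\<^sup>2 / 2 - lam * c)))" .
    show ?thesis unfolding E using nn by (subst ennreal_plus) auto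
  qed
  also have "real (card Q) * (2 * C * exp (lam\<^sup>2 * s\<^sup>2 / 2 - lam * c)) = exp (-1)"
  proof -
    have pos: "2 * C * real (card Q) > 0" using C fin ne by (simp add: card_gt_0_iff)
    have "lam\<^sup>2 * s\<^sup>2 / 2 - lam * c = - (ln (2 * C * real (card Q)) + 1)"
      using lam unfolding cdef by (simp add: field_simps power2_eq_square)
    then have "exp (lam\<^sup>2 * s\<^sup>2 / 2 - lam * c) = exp (-1 - ln (2 * C * real (card Q)))"
      by simp
    also have "\<dots> = exp (-1) / exp (ln (2 * C * real (card Q)))" by (rule exp_diff)
    also have "\<dots> = exp (-1) / (2 * C * real (card Q))" using pos by simp
    finally have "exp (lam\<^sup>2 * s\<^sup>2 / 2 - lam * c) = exp (-1) / (2 * C * real (card Q))" .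
    moreover have "card Q > 0" using fin ne by (simp add: card_gt_0_iff)
    ultimately show ?thesis using pos C by (simp add: field_simps)
  qed
  also have "ennreal (1 + exp (-1)) \<le> 2"
  proof -
    have "exp (-1::real) \<le> 1" by simp
    then have "ennreal (1 + exp (-1)) \<le> ennreal 2" by (intro ennreal_leI) simp
    then show ?thesis by simp
  qed
  finally show ?thesis .
qed


lemma key_expmom:
  fixes Z :: "'q \<Rightarrow> 'a \<Rightarrow> real" and Q :: "nat \<Rightarrow> 'q set" and \<sigma> :: "nat \<Rightarrow> real"
  assumes M: "prob_space M"
    and fin: "\<And>m. finite (Q m)" and ne: "\<And>m. Q m \<noteq> {}"
    and meas: "\<And>m q. q \<in> Q m \<Longrightarrow> Z q \<in> borel_measurable M"
    and C: "C \<ge> 1" and sig: "\<And>m. \<sigma> m > 0"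
    and mgf1: "\<And>m q l. q \<in> Q m \<Longrightarrow> l > 0 \<Longrightarrow>
        (\<integral>\<^sup>+\<omega>. ennreal (exp (l * Z q \<omega>)) \<partial>M) \<le> ennreal (C * exp (l\<^sup>2 * (\<sigma> m)\<^sup>2 / 2))"
    and mgf2: "\<And>m q l. q \<in> Q m \<Longrightarrow> l > 0 \<Longrightarrow>
        (\<integral>\<^sup>+\<omega>. ennreal (exp (l * - Z q \<omega>)) \<partial>M) \<le> ennreal (C * exp (l\<^sup>2 * (\<sigma> m)\<^sup>2 / 2))"
    and summ: "summable (\<lambda>m. \<sigma> m * sqrt (ln (2 * C * real (card (Q m))) + 1))"
    and p: "p > 0"
  shows "\<exists>K. \<forall>N. (\<integral>\<^sup>+\<omega>. ennreal (exp (p * (\<Sum>m<N. (MAX q\<in>Q m. \<bar>Z q \<omega>\<bar>)))) \<partial>M) \<le> ennreal K"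
proof -
  interpret prob_space M by fact
  define L where "L m = ln (2 * C * real (card (Q m))) + 1" for m
  have cardpos: "real (card (Q m)) \<ge> 1" for m
    using fin[of m] ne[of m] by (simp add: Suc_le_eq card_gt_0_iff)
  have L1: "L m \<ge> 1" for m
  proof -
    have "1 * 1 \<le> (2 * C) * real (card (Q m))" using C cardpos[of m]
      by (intro mult_mono) auto
    then have "2 * C * real (card (Q m)) \<ge> 1" by simp
    then show ?thesis unfolding L_def by simp
  qed
  have sqL: "sqrt (L m) \<ge> 1" for m using L1[of m] by simp
  define b where "b m = \<sigma> m / sqrt (L m)" for m
  have bpos: "b m > 0" for m using sig[of m] sqL[of m] by (simp add: b_def)
  have ble: "b m \<le> \<sigma> m * sqrt (L m)" for m
  proof -
    have "b m \<le> \<sigma> m" using sig[of m] sqL[of m] unfolding b_def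
      by (simp add: divide_le_eq)
    also have "\<dots> \<le> \<sigma> m * sqrt (L m)" using sig[of m] sqL[of m] by simp
    finally show ?thesis .
  qed
  have summ': "summable (\<lambda>m. \<sigma> m * sqrt (L m))" using summ by (simp add: L_def)
  have sb: "summable b"
    by (rule summable_comparison_test'[OF summ']) (use bpos ble in \<open>auto simp: less_imp_le\<close>)
  define B where "B = suminf b"
  have Bpos: "B > 0" unfolding B_def by (rule suminf_pos[OF sb bpos])
  define a where "a m = b m / B" for m
  have apos: "a m > 0" for m using bpos[of m] Bpos by (simp add: a_def)
  have asum: "sum a {..<N} \<le> 1" for N
  proof -
    have "sum b {..<N} \<le> B" unfolding B_def
      by (rule sum_le_suminf[OF sb]) (use bpos in \<open>auto simp: less_imp_le\<close>)
    then show ?thesis using Bpos by (simp add: a_def sum_divide_distrib[symmetric])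
  qed
  define lam where "lam m = p / a m" for m
  have lampos: "lam m > 0" for m using apos[of m] p by (simp add: lam_def)
  define c where "c m = lam m * (\<sigma> m)\<^sup>2 / 2 + L m / lam m" for m
  have ceq: "c m = (p * B / 2 + 1 / (B * p)) * (\<sigma> m * sqrt (L m))" for m
  proof -
    define sL where "sL = sqrt (L m)"
    have sLp: "sL > 0" using sqL[of m] by (simp add: sL_def)
    have Lsq: "L m = sL * sL" using L1[of m] by (simp add: sL_def)
    have lamq: "lam m = p * B * sL / \<sigma> m"
      using sLp sig[of m] Bpos p by (simp add: lam_def a_def b_def sL_def[symmetric])
    show ?thesis unfolding c_def lamq Lsq
      using sLp sig[of m] Bpos p by (simp add: field_simps power2_eq_square)
  qed
  have sc: "summable c" unfolding ceq by (intro summable_mult summ')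
  have cnn: "c m \<ge> 0" for m using lampos[of m] L1[of m] unfolding c_def
    by (intro add_nonneg_nonneg) auto
  define Cs where "Cs = suminf c"
  define D where "D m \<omega> = (MAX q\<in>Q m. \<bar>Z q \<omega>\<bar>)" for m \<omega>
  have Dmeas: "D m \<in> borel_measurable M" for m
    unfolding D_def by (intro borel_measurable_Max fin) (use meas in measurable)
  define x where "x m \<omega> = lam m * max 0 (D m \<omega> - c m)" for m \<omega>
  have xmeas: "(\<lambda>\<omega>. ennreal (exp (x m \<omega>))) \<in> borel_measurable M" for m
    unfolding x_def using Dmeas[of m] by measurable
  have cdef': "c m = lam m * (\<sigma> m)\<^sup>2 / 2 + (ln (2 * C * real (card (Q m))) + 1) / lam m" for m
    by (simp add: c_def L_def)
  have lev: "(\<integral>\<^sup>+\<omega>. ennreal (exp (x m \<omega>)) \<partial>M) \<le> 2" for m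
    unfolding x_def D_def
    by (rule level_bound[OF M fin[of m] ne[of m] meas[where m=m] C lampos[of m]
           mgf1[where m=m and l="lam m", OF _ lampos[of m]] mgf2[where m=m and l="lam m", OF _ lampos[of m]]
           cdef'])
  have pw: "ennreal (exp (p * (\<Sum>m<N. D m \<omega>)))
      \<le> ennreal (exp (p * Cs)) * (ennreal (1 - sum a {..<N}) + (\<Sum>m<N. ennreal (a m) * ennreal (exp (x m \<omega>))))"
    for N \<omega>
  proof -
    have "p * (\<Sum>m<N. D m \<omega>) \<le> p * Cs + (\<Sum>m<N. a m * x m \<omega>)"
    proof -
      have "p * (\<Sum>m<N. D m \<omega>) = (\<Sum>m<N. p * D m \<omega>)" by (simp add: sum_distrib_left)
      also have "\<dots> \<le> (\<Sum>m<N. p * c m + a m * x m \<omega>)"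
      proof (intro sum_mono)
        fix m
        have "a m * lam m = p" using apos[of m] by (simp add: lam_def)
        then have "a m * x m \<omega> = p * max 0 (D m \<omega> - c m)" by (simp add: x_def mult.assoc[symmetric])
        then show "p * D m \<omega> \<le> p * c m + a m * x m \<omega>" using p
          by (simp add: distrib_left[symmetric] mult_left_mono)
      qed
      also have "\<dots> = p * (\<Sum>m<N. c m) + (\<Sum>m<N. a m * x m \<omega>)"
        by (simp add: sum.distrib sum_distrib_left)
      also have "(\<Sum>m<N. c m) \<le> Cs" unfolding Cs_def
        by (rule sum_le_suminf[OF sc]) (use cnn in auto)
      finally show ?thesis using p by (simp add: mult_left_mono)
    qed
    then have "exp (p * (\<Sum>m<N. D m \<omega>)) \<le> exp (p * Cs) * exp (\<Sum>m<N. a m * x m \<omega>)"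
      by (simp add: exp_add[symmetric])
    also have "\<dots> \<le> exp (p * Cs) * ((1 - sum a {..<N}) + (\<Sum>m<N. a m * exp (x m \<omega>)))"
      by (intro mult_left_mono jensen_exp_weights asum) (use apos in \<open>auto simp: less_imp_le\<close>)
    finally have r: "exp (p * (\<Sum>m<N. D m \<omega>)) \<le> exp (p * Cs) * ((1 - sum a {..<N}) + (\<Sum>m<N. a m * exp (x m \<omega>)))" .
    have nn1: "0 \<le> 1 - sum a {..<N}" using asum[of N] by simp
    have nn2: "0 \<le> (\<Sum>m<N. a m * exp (x m \<omega>))" using apos by (intro sum_nonneg) (simp add: less_imp_le)
    have "ennreal (exp (p * Cs) * ((1 - sum a {..<N}) + (\<Sum>m<N. a m * exp (x m \<omega>))))
       = ennreal (exp (p * Cs)) * (ennreal (1 - sum a {..<N}) + (\<Sum>m<N. ennreal (a m) * ennreal (exp (x m \<omega>))))"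
    proof -
      have e1: "ennreal (\<Sum>m<N. a m * exp (x m \<omega>)) = (\<Sum>m<N. ennreal (a m) * ennreal (exp (x m \<omega>)))"
        using apos by (subst sum_ennreal[symmetric]) (auto simp: ennreal_mult less_imp_le)
      have "ennreal (exp (p * Cs) * ((1 - sum a {..<N}) + (\<Sum>m<N. a m * exp (x m \<omega>))))
        = ennreal (exp (p * Cs)) * ennreal ((1 - sum a {..<N}) + (\<Sum>m<N. a m * exp (x m \<omega>)))"
        using nn1 nn2 by (intro ennreal_mult) auto
      also have "ennreal ((1 - sum a {..<N}) + (\<Sum>m<N. a m * exp (x m \<omega>)))
        = ennreal (1 - sum a {..<N}) + ennreal (\<Sum>m<N. a m * exp (x m \<omega>))"
        using nn1 nn2 by (rule ennreal_plus)
      finally show ?thesis unfolding e1 .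
    qed
    then show ?thesis using ennreal_leI[OF r] by simp
  qed
  have "(\<integral>\<^sup>+\<omega>. ennreal (exp (p * (\<Sum>m<N. D m \<omega>))) \<partial>M) \<le> ennreal (2 * exp (p * Cs))" for N
  proof -
    have "(\<integral>\<^sup>+\<omega>. ennreal (exp (p * (\<Sum>m<N. D m \<omega>))) \<partial>M)
      \<le> (\<integral>\<^sup>+\<omega>. ennreal (exp (p * Cs)) * (ennreal (1 - sum a {..<N}) + (\<Sum>m<N. ennreal (a m) * ennreal (exp (x m \<omega>)))) \<partial>M)"
      by (intro nn_integral_mono pw)
    also have "\<dots> = ennreal (exp (p * Cs)) * (ennreal (1 - sum a {..<N}) + (\<Sum>m<N. ennreal (a m) * (\<integral>\<^sup>+\<omega>. ennreal (exp (x m \<omega>)) \<partial>M)))"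
    proof -
      have m1: "(\<lambda>\<omega>. ennreal (a m) * ennreal (exp (x m \<omega>))) \<in> borel_measurable M" for m
        using xmeas[of m] by measurable
      have m2: "(\<lambda>\<omega>. (\<Sum>m<N. ennreal (a m) * ennreal (exp (x m \<omega>)))) \<in> borel_measurable M"
        using m1 by (intro borel_measurable_sum) 
      have m3: "(\<lambda>\<omega>. ennreal (1 - sum a {..<N}) + (\<Sum>m<N. ennreal (a m) * ennreal (exp (x m \<omega>)))) \<in> borel_measurable M"
        using m2 by measurable
      have "(\<integral>\<^sup>+\<omega>. ennreal (exp (p * Cs)) * (ennreal (1 - sum a {..<N}) + (\<Sum>m<N. ennreal (a m) * ennreal (exp (x m \<omega>)))) \<partial>M)
        = ennreal (exp (p * Cs)) * (\<integral>\<^sup>+\<omega>. (ennreal (1 - sum a {..<N}) + (\<Sum>m<N. ennreal (a m) * ennreal (exp (x m \<omega>)))) \<partial>M)"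
        by (rule nn_integral_cmult[OF m3])
      also have "(\<integral>\<^sup>+\<omega>. (ennreal (1 - sum a {..<N}) + (\<Sum>m<N. ennreal (a m) * ennreal (exp (x m \<omega>)))) \<partial>M)
        = ennreal (1 - sum a {..<N}) + (\<integral>\<^sup>+\<omega>. (\<Sum>m<N. ennreal (a m) * ennreal (exp (x m \<omega>))) \<partial>M)"
        using m2 by (subst nn_integral_add) (auto simp: emeasure_space_1)
      also have "(\<integral>\<^sup>+\<omega>. (\<Sum>m<N. ennreal (a m) * ennreal (exp (x m \<omega>))) \<partial>M)
        = (\<Sum>m<N. \<integral>\<^sup>+\<omega>. ennreal (a m) * ennreal (exp (x m \<omega>)) \<partial>M)"
        using m1 by (intro nn_integral_sum) auto
      also have "\<dots> = (\<Sum>m<N. ennreal (a m) * (\<integral>\<^sup>+\<omega>. ennreal (exp (x m \<omega>)) \<partial>M))"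
        using xmeas by (intro sum.cong refl nn_integral_cmult)
      finally show ?thesis .
    qed
    also have "\<dots> \<le> ennreal (exp (p * Cs)) * (ennreal (1 - sum a {..<N}) + (\<Sum>m<N. ennreal (a m) * 2))"
      by (intro mult_left_mono add_left_mono sum_mono lev) auto
    also have "\<dots> = ennreal (exp (p * Cs) * ((1 - sum a {..<N}) + 2 * sum a {..<N}))"
    proof -
      define s where "s = sum a {..<N}"
      have s0: "0 \<le> s" unfolding s_def using apos by (intro sum_nonneg) (simp add: less_imp_le)
      have s1: "s \<le> 1" unfolding s_def by (rule asum)
      have A: "(\<Sum>m<N. ennreal (a m) * 2) = ennreal (2 * s)"
      proof -
        have "(\<Sum>m<N. ennreal (a m) * 2) = ennreal (\<Sum>m<N. a m * 2)"
          using apos by (subst sum_ennreal[symmetric]) (auto simp: less_imp_le ennreal_mult'')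
        also have "(\<Sum>m<N. a m * 2) = 2 * s" unfolding s_def by (simp add: sum_distrib_left mult.commute)
        finally show ?thesis .
      qed
      have B: "ennreal (1 - s) + ennreal (2 * s) = ennreal ((1 - s) + 2 * s)"
        by (rule ennreal_plus[symmetric]) (use s0 s1 in auto)
      have Cc: "ennreal (exp (p * Cs)) * ennreal ((1 - s) + 2 * s) = ennreal (exp (p * Cs) * ((1 - s) + 2 * s))"
        by (rule ennreal_mult[symmetric]) (use s0 s1 in auto)
      show ?thesis unfolding s_def[symmetric] by (simp only: A B Cc)
    qed
    also have "\<dots> \<le> ennreal (2 * exp (p * Cs))"
      using asum[of N] by (intro ennreal_leI) simp
    finally show ?thesis .
  qed
  then show ?thesis unfolding D_def by blast
qed


locale dudley_setup =
  fixes M :: "'a measure" and \<Theta> :: "'b set" and d :: "'b \<Rightarrow> 'b \<Rightarrow> real"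
    and X :: "'b \<Rightarrow> 'a \<Rightarrow> real" and C :: real and \<theta>0 :: 'b
  assumes prob: "prob_space M"
    and semi: "semimetric_on \<Theta> d"
    and tb: "totally_bounded_wrt \<Theta> d"
    and Xmeas: "\<And>\<theta>. \<theta> \<in> \<Theta> \<Longrightarrow> X \<theta> \<in> borel_measurable M"
    and C1: "C \<ge> 1"
    and mgf: "\<And>\<theta> \<phi> l. \<theta> \<in> \<Theta> \<Longrightarrow> \<phi> \<in> \<Theta> \<Longrightarrow> l > 0 \<Longrightarrow>
        (\<integral>\<^sup>+ \<omega>. ennreal (exp (l * (X \<theta> \<omega> - X \<phi> \<omega>))) \<partial>M) \<le> ennreal (C * exp (l\<^sup>2 * (d \<theta> \<phi>)\<^sup>2 / 2))"
    and dud: "dudley_integral \<Theta> d (diameter_wrt \<Theta> d) < \<infinity>"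
    and root: "\<theta>0 \<in> \<Theta>"
begin

lemma d_nonneg: "s \<in> \<Theta> \<Longrightarrow> t \<in> \<Theta> \<Longrightarrow> 0 \<le> d s t"
  using semi unfolding semimetric_on_def by blast
lemma d_sym: "s \<in> \<Theta> \<Longrightarrow> t \<in> \<Theta> \<Longrightarrow> d s t = d t s"
  using semi unfolding semimetric_on_def by blast
lemma d_refl: "s \<in> \<Theta> \<Longrightarrow> d s s = 0"
  using semi unfolding semimetric_on_def by blast
lemma d_tri: "r \<in> \<Theta> \<Longrightarrow> s \<in> \<Theta> \<Longrightarrow> t \<in> \<Theta> \<Longrightarrow> d r t \<le> d r s + d s t"
  using semi unfolding semimetric_on_def by blast

lemma cover_ex: "e > 0 \<Longrightarrow> \<exists>F. finite F \<and> F \<subseteq> \<Theta> \<and> \<Theta> \<subseteq> (\<Union>c\<in>F. {t. d c t < e})"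
  using tb unfolding totally_bounded_wrt_def by blast

lemma bdd_d: "bdd_above {d s t | s t. s \<in> \<Theta> \<and> t \<in> \<Theta>}"
proof -
  obtain F where F: "finite F" "F \<subseteq> \<Theta>" "\<Theta> \<subseteq> (\<Union>c\<in>F. {t. d c t < 1})"
    using cover_ex[of 1] by auto
  define K where "K = Max (insert 0 ((\<lambda>(x, y). d x y) ` (F \<times> F)))"
  have Kge: "x \<in> F \<Longrightarrow> y \<in> F \<Longrightarrow> d x y \<le> K" for x y
    unfolding K_def using F(1) by (intro Max_ge) auto
  have "d s t \<le> K + 2" if "s \<in> \<Theta>" "t \<in> \<Theta>" for s t
  proof -
    obtain c1 where c1: "c1 \<in> F" "d c1 s < 1" using F(3) \<open>s \<in> \<Theta>\<close> by auto
    obtain c2 where c2: "c2 \<in> F" "d c2 t < 1" using F(3) \<open>t \<in> \<Theta>\<close> by auto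
    have in\<Theta>: "c1 \<in> \<Theta>" "c2 \<in> \<Theta>" using c1 c2 F(2) by auto
    have "d s t \<le> d s c1 + d c1 t" using d_tri in\<Theta> that by blast
    also have "d c1 t \<le> d c1 c2 + d c2 t" using d_tri in\<Theta> that by blast
    finally show ?thesis using Kge[OF c1(1) c2(1)] c1 c2 d_sym[of s c1] in\<Theta> that by linarith
  qed
  then show ?thesis unfolding bdd_above_def by blast
qed

definition "\<Delta> = diameter_wrt \<Theta> d"

lemma d_le_Delta: "s \<in> \<Theta> \<Longrightarrow> t \<in> \<Theta> \<Longrightarrow> d s t \<le> \<Delta>"
  unfolding \<Delta>_def diameter_wrt_def by (rule cSup_upper[OF _ bdd_d]) blast

lemma Delta_nonneg: "0 \<le> \<Delta>"
  using d_le_Delta[OF root root] d_refl[OF root] by simp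

definition "R = \<Delta> + 1"
definition "eps m = R / 2 ^ m"

lemma eps_pos: "eps m > 0"
  using Delta_nonneg by (simp add: eps_def R_def)
lemma eps_Suc: "eps (Suc m) = eps m / 2"
  by (simp add: eps_def)
lemma eps_mono: "k \<le> m \<Longrightarrow> eps m \<le> eps k"
  using Delta_nonneg unfolding eps_def R_def
  by (intro divide_left_mono) (auto intro: power_increasing)
lemma eps_0: "eps 0 = R" by (simp add: eps_def)
lemma summable_eps: "summable eps"
proof -
  have "summable (\<lambda>m. R * (1/2::real)^m)" by (intro summable_mult summable_geometric) simp
  moreover have "eps = (\<lambda>m. R * (1/2)^m)" by (auto simp: eps_def power_one_over)
  ultimately show ?thesis by simp
qed

abbreviation "Ncov e \<equiv> covering_number \<Theta> d e"

lemma Ncov_cover: "e > 0 \<Longrightarrow> \<exists>F. finite F \<and> card F = Ncov e \<and> F \<subseteq> \<Theta> \<and> \<Theta> \<subseteq> (\<Union>c\<in>F. {t. d c t < e})"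
proof -
  assume e: "e > 0"
  obtain F where F: "finite F" "F \<subseteq> \<Theta>" "\<Theta> \<subseteq> (\<Union>c\<in>F. {t. d c t < e})"
    using cover_ex[OF e] by blast
  have "\<exists>n F. finite F \<and> card F = n \<and> F \<subseteq> \<Theta> \<and> \<Theta> \<subseteq> (\<Union>c\<in>F. {t. d c t < e})"
    using F by blast
  then show ?thesis unfolding covering_number_def by (rule LeastI_ex)
qed

lemma Ncov_mono: "0 < e \<Longrightarrow> e \<le> e' \<Longrightarrow> Ncov e' \<le> Ncov e"
proof -
  assume e: "0 < e" "e \<le> e'"
  obtain F where F: "finite F" "card F = Ncov e" "F \<subseteq> \<Theta>" "\<Theta> \<subseteq> (\<Union>c\<in>F. {t. d c t < e})"
    using Ncov_cover[OF e(1)] by blast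
  have "\<Theta> \<subseteq> (\<Union>c\<in>F. {t. d c t < e'})"
  proof
    fix t assume "t \<in> \<Theta>"
    then obtain c where "c \<in> F" "d c t < e" using F(4) by blast
    then show "t \<in> (\<Union>c\<in>F. {t. d c t < e'})" using e(2) by (intro UN_I[of c]) auto
  qed
  then have "\<exists>G. finite G \<and> card G = card F \<and> G \<subseteq> \<Theta> \<and> \<Theta> \<subseteq> (\<Union>c\<in>G. {t. d c t < e'})"
    using F by (intro exI[of _ F]) simp
  then have "Ncov e' \<le> card F" unfolding covering_number_def by (rule Least_le)
  then show ?thesis using F(2) by simp
qed

lemma Ncov_ge1: "0 < e \<Longrightarrow> Ncov e \<ge> 1"
proof -
  assume e: "0 < e"
  obtain F where F: "finite F" "card F = Ncov e" "F \<subseteq> \<Theta>" "\<Theta> \<subseteq> (\<Union>c\<in>F. {t. d c t < e})"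
    using Ncov_cover[OF e] by blast
  have "F \<noteq> {}" using F(4) root by auto
  then show ?thesis using F(1,2) by (metis One_nat_def Suc_leI card_gt_0_iff)
qed

lemma Ncov_big: "e > \<Delta> \<Longrightarrow> Ncov e = 1"
proof -
  assume e: "e > \<Delta>"
  have "\<Theta> \<subseteq> (\<Union>c\<in>{\<theta>0}. {t. d c t < e})" using d_le_Delta[OF root] e by fastforce
  then have "\<exists>G. finite G \<and> card G = 1 \<and> G \<subseteq> \<Theta> \<and> \<Theta> \<subseteq> (\<Union>c\<in>G. {t. d c t < e})"
    using root by (intro exI[of _ "{\<theta>0}"]) auto
  then have "Ncov e \<le> 1" unfolding covering_number_def by (rule Least_le)
  with Ncov_ge1[of e] e Delta_nonneg show ?thesis by linarith
qed

end


context dudley_setup begin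

definition "A m = (if m = 0 then {\<theta>0} else
   (SOME F. finite F \<and> card F = Ncov (eps m) \<and> F \<subseteq> \<Theta> \<and> \<Theta> \<subseteq> (\<Union>c\<in>F. {t. d c t < eps m})))"

lemma A_props: "finite (A m) \<and> A m \<subseteq> \<Theta> \<and> \<Theta> \<subseteq> (\<Union>c\<in>A m. {t. d c t < eps m}) \<and> card (A m) \<le> Ncov (eps m)"
proof (cases "m = 0")
  case True
  have "\<Theta> \<subseteq> (\<Union>c\<in>{\<theta>0}. {t. d c t < eps m})"
  proof
    fix t assume "t \<in> \<Theta>"
    then have "d \<theta>0 t < eps m" using d_le_Delta[OF root, of t] True by (simp add: eps_0 R_def)
    then show "t \<in> (\<Union>c\<in>{\<theta>0}. {t. d c t < eps m})" by simp
  qed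
  then show ?thesis using True root Ncov_ge1[OF eps_pos[of m]] by (simp add: A_def)
next
  case False
  have "\<exists>F. finite F \<and> card F = Ncov (eps m) \<and> F \<subseteq> \<Theta> \<and> \<Theta> \<subseteq> (\<Union>c\<in>F. {t. d c t < eps m})"
    by (rule Ncov_cover[OF eps_pos])
  from someI_ex[OF this] show ?thesis using False unfolding A_def by simp
qed

definition "B m = (\<Union>k\<le>m. A k)"

lemma B_finite: "finite (B m)" using A_props by (simp add: B_def)
lemma B_sub: "B m \<subseteq> \<Theta>" using A_props by (auto simp: B_def)
lemma B_mono: "k \<le> m \<Longrightarrow> B k \<subseteq> B m" unfolding B_def by (intro UN_mono) auto
lemma B_0: "B 0 = {\<theta>0}" by (simp add: B_def A_def)
lemma root_B: "\<theta>0 \<in> B m" using B_mono[of 0 m] B_0 by auto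
lemma B_cover: "\<theta> \<in> \<Theta> \<Longrightarrow> \<exists>c\<in>B m. d c \<theta> < eps m"
proof -
  assume "\<theta> \<in> \<Theta>"
  then obtain c where "c \<in> A m" "d c \<theta> < eps m" using A_props[of m] by blast
  moreover have "A m \<subseteq> B m" unfolding B_def by blast
  ultimately show ?thesis by blast
qed

lemma B_card: "card (B m) \<le> Suc m * Ncov (eps m)"
proof -
  have "card (B m) \<le> (\<Sum>k\<le>m. card (A k))" unfolding B_def by (rule card_UN_le) simp
  also have "\<dots> \<le> (\<Sum>k\<le>m. Ncov (eps m))"
  proof (intro sum_mono)
    fix k assume "k \<in> {..m}"
    then have "eps m \<le> eps k" by (intro eps_mono) simp
    then show "card (A k) \<le> Ncov (eps m)" using A_props[of k] Ncov_mono[OF eps_pos[of m]] by (meson order.trans)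
  qed
  also have "\<dots> = Suc m * Ncov (eps m)" by simp
  finally show ?thesis .
qed

definition "proj m \<theta> = (SOME c. c \<in> B m \<and> d c \<theta> < eps m)"

lemma proj: "\<theta> \<in> \<Theta> \<Longrightarrow> proj m \<theta> \<in> B m \<and> d (proj m \<theta>) \<theta> < eps m"
  unfolding proj_def by (rule someI_ex) (use B_cover in blast)

lemma proj_in: "\<theta> \<in> \<Theta> \<Longrightarrow> proj m \<theta> \<in> \<Theta>" using proj B_sub by blast

definition "S = (\<Union>m. B m)"

lemma S_countable: "countable S" unfolding S_def using B_finite by (simp add: countable_finite)
lemma S_sub: "S \<subseteq> \<Theta>" unfolding S_def using B_sub by blast

definition "Q m = {(u, v). u \<in> B (Suc m) \<and> v \<in> B (Suc m) \<and> d u v \<le> 5 * eps m}"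

lemma Q_sub: "Q m \<subseteq> B (Suc m) \<times> B (Suc m)" by (auto simp: Q_def)
lemma Q_finite: "finite (Q m)" using Q_sub B_finite by (meson finite_SigmaI finite_subset)
lemma Q_ne: "Q m \<noteq> {}"
proof -
  have "(\<theta>0, \<theta>0) \<in> Q m" using root_B[of "Suc m"] d_refl[OF root] eps_pos[of m]
    by (simp add: Q_def)
  then show ?thesis by blast
qed
lemma Q_Theta: "q \<in> Q m \<Longrightarrow> fst q \<in> \<Theta> \<and> snd q \<in> \<Theta>"
  using Q_sub B_sub by fastforce

lemma Q_card: "real (card (Q m)) \<le> (real (Suc (Suc m)) * real (Ncov (eps (Suc m))))\<^sup>2"
proof -
  have "card (Q m) \<le> card (B (Suc m) \<times> B (Suc m))"
    by (rule card_mono) (use B_finite Q_sub in auto)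
  also have "\<dots> = card (B (Suc m)) * card (B (Suc m))" by (rule card_cartesian_product)
  also have "\<dots> \<le> (Suc (Suc m) * Ncov (eps (Suc m))) * (Suc (Suc m) * Ncov (eps (Suc m)))"
    using B_card[of "Suc m"] by (intro mult_mono) auto
  finally have "real (card (Q m)) \<le> real ((Suc (Suc m) * Ncov (eps (Suc m))) * (Suc (Suc m) * Ncov (eps (Suc m))))"
    by linarith
  then show ?thesis unfolding power2_eq_square of_nat_mult[symmetric] .
qed

end


context dudley_setup begin

lemma Ncov_real_ge1: "e > 0 \<Longrightarrow> real (Ncov e) \<ge> 1"
  using Ncov_ge1[of e] by simp

lemma dudley_summable: "summable (\<lambda>m. eps m * sqrt (ln (real (Ncov (eps m)))))"
proof -
  define g where "g m = sqrt (ln (real (Ncov (eps m))))" for m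
  have g0: "0 \<le> g m" for m using Ncov_real_ge1[OF eps_pos[of m]] by (simp add: g_def)
  define f where "f e = indicator {0<..\<Delta>} e * ennreal (sqrt (ln (real (Ncov e))))" for e :: real
  have dint: "(\<integral>\<^sup>+e. f e \<partial>lborel) < \<infinity>" using dud by (simp add: dudley_integral_def f_def \<Delta>_def)
  define I where "I m = {eps (Suc m)<..eps m}" for m
  have disj: "disjoint_family I"
    unfolding disjoint_family_on_def
  proof (intro ballI impI)
    fix m k :: nat assume "m \<noteq> k"
    have aux: "I m \<inter> I k = {}" if "m < k" for m k
    proof -
      have "eps k \<le> eps (Suc m)" using that by (intro eps_mono) simp
      then show ?thesis by (auto simp: I_def)
    qed
    show "I m \<inter> I k = {}"
      using \<open>m \<noteq> k\<close> aux[of m k] aux[of k m] by (cases "m < k") (auto simp: Int_commute)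
  qed
  have key: "ennreal (g m) \<le> f e" if e: "e \<in> I m" for m e
  proof (cases "eps m > \<Delta>")
    case True
    then have "g m = 0" using Ncov_big[OF True] by (simp add: g_def)
    then show ?thesis by simp
  next
    case False
    have e1: "eps (Suc m) < e" "e \<le> eps m" using e by (auto simp: I_def)
    have epos: "0 < e" using e1 eps_pos[of "Suc m"] by linarith
    have eD: "e \<in> {0<..\<Delta>}" using e1 epos False by auto
    have "Ncov (eps m) \<le> Ncov e" by (rule Ncov_mono[OF epos e1(2)])
    then have "ln (real (Ncov (eps m))) \<le> ln (real (Ncov e))"
      using Ncov_real_ge1[OF eps_pos[of m]] by (subst ln_le_cancel_iff) auto
    then have "g m \<le> sqrt (ln (real (Ncov e)))" by (simp add: g_def)
    then show ?thesis using eD by (simp add: f_def ennreal_leI)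
  qed
  have pw: "(\<Sum>m<K. ennreal (g m) * indicator (I m) e) \<le> f e" for K e
  proof -
    have "(\<Sum>m<K. ennreal (g m) * indicator (I m) e) \<le> (\<Sum>m<K. f e * indicator (I m) e)"
      by (intro sum_mono) (auto simp: indicator_def key)
    also have "\<dots> = f e * (\<Sum>m<K. indicator (I m) e)" by (simp add: sum_distrib_left)
    also have "(\<Sum>m<K. indicator (I m) e) = (indicator (\<Union>m\<in>{..<K}. I m) e :: ennreal)"
      by (rule indicator_UN_disjoint[symmetric]) (use disj in \<open>auto simp: disjoint_family_on_def\<close>)
    also have "f e * \<dots> \<le> f e" by (auto simp: indicator_def)
    finally show ?thesis .
  qed
  have int_eq: "(\<integral>\<^sup>+e. ennreal (g m) * indicator (I m) e \<partial>lborel) = ennreal (g m * (eps m / 2))" for m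
  proof -
    have "(\<integral>\<^sup>+e. ennreal (g m) * indicator (I m) e \<partial>lborel) = ennreal (g m) * emeasure lborel (I m)"
      by (rule nn_integral_cmult_indicator) (simp add: I_def)
    also have "emeasure lborel (I m) = ennreal (eps m - eps (Suc m))"
      unfolding I_def by (rule emeasure_lborel_Ioc) (simp add: eps_Suc eps_pos less_imp_le)
    also have "eps m - eps (Suc m) = eps m / 2" by (simp add: eps_Suc)
    also have "ennreal (g m) * ennreal (eps m / 2) = ennreal (g m * (eps m / 2))"
      using g0[of m] eps_pos[of m] by (intro ennreal_mult[symmetric]) auto
    finally show ?thesis .
  qed
  have bnd: "(\<Sum>m<K. g m * (eps m / 2)) \<le> enn2real (\<integral>\<^sup>+e. f e \<partial>lborel)" for K
  proof -
    have "ennreal (\<Sum>m<K. g m * (eps m / 2)) = (\<Sum>m<K. ennreal (g m * (eps m / 2)))"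
      using g0 eps_pos by (intro sum_ennreal[symmetric]) (simp add: less_imp_le)
    also have "\<dots> = (\<Sum>m<K. \<integral>\<^sup>+e. ennreal (g m) * indicator (I m) e \<partial>lborel)"
      by (simp add: int_eq)
    also have "\<dots> = (\<integral>\<^sup>+e. (\<Sum>m<K. ennreal (g m) * indicator (I m) e) \<partial>lborel)"
      by (rule nn_integral_sum[symmetric]) (simp add: I_def)
    also have "\<dots> \<le> (\<integral>\<^sup>+e. f e \<partial>lborel)" by (intro nn_integral_mono pw)
    finally have "ennreal (\<Sum>m<K. g m * (eps m / 2)) \<le> (\<integral>\<^sup>+e. f e \<partial>lborel)" .
    then have "enn2real (ennreal (\<Sum>m<K. g m * (eps m / 2))) \<le> enn2real (\<integral>\<^sup>+e. f e \<partial>lborel)"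
      using dint by (auto intro!: enn2real_mono)
    moreover have "0 \<le> (\<Sum>m<K. g m * (eps m / 2))"
      using g0 eps_pos by (intro sum_nonneg mult_nonneg_nonneg) (auto simp: less_imp_le)
    ultimately show ?thesis by simp
  qed
  have "summable (\<lambda>m. g m * (eps m / 2))"
    by (rule summableI_nonneg_bounded[OF _ bnd]) (use g0 eps_pos in \<open>simp add: less_imp_le\<close>)
  then have "summable (\<lambda>m. 2 * (g m * (eps m / 2)))" by (rule summable_mult)
  then show ?thesis by (simp add: g_def mult.commute)
qed

lemma summable_eps_lin: "summable (\<lambda>m. eps m * (real m + 2))"
proof (rule summable_ratio_test[where c = "3/4" and N = 0])
  fix n :: nat
  have "eps (Suc n) * (real (Suc n) + 2) = eps n * ((real n + 3) / 2)"
    by (simp add: eps_Suc field_simps)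
  also have "\<dots> \<le> eps n * (3/4 * (real n + 2))"
    using eps_pos[of n] by (intro mult_left_mono) auto
  finally show "norm (eps (Suc n) * (real (Suc n) + 2)) \<le> 3/4 * norm (eps n * (real n + 2))"
    using eps_pos[of n] eps_pos[of "Suc n"] by (auto simp: abs_mult algebra_simps)
qed simp

lemma sqrt_ln_bound: "x \<ge> 1 \<Longrightarrow> sqrt (2 * ln x) \<le> x"
proof -
  assume x: "x \<ge> 1"
  have "ln x \<le> x - 1" using x by (intro ln_le_minus_one) simp
  moreover have "(x - 1)\<^sup>2 = x * x - 2 * x + 1" by (simp add: power2_eq_square algebra_simps)
  moreover have "0 \<le> (x - 1)\<^sup>2" by simp
  moreover have "x\<^sup>2 = x * x" by (simp add: power2_eq_square)
  ultimately have "2 * ln x \<le> x\<^sup>2" by linarith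
  then have "sqrt (2 * ln x) \<le> sqrt (x\<^sup>2)" by (rule real_sqrt_le_mono)
  then show ?thesis using x by simp
qed

lemma Q_summable: "summable (\<lambda>m. (5 * eps m) * sqrt (ln (2 * C * real (card (Q m))) + 1))"
proof -
  define n where "n m = real (Ncov (eps (Suc m)))" for m
  have n1: "n m \<ge> 1" for m unfolding n_def by (rule Ncov_real_ge1[OF eps_pos])
  define K0 where "K0 = sqrt (ln (2 * C) + 1)"
  have C2: "2 * C \<ge> 1" using C1 by simp
  have cardQ1: "real (card (Q m)) \<ge> 1" for m
    using Q_finite[of m] Q_ne[of m] by (simp add: Suc_le_eq card_gt_0_iff)
  have bound: "sqrt (ln (2 * C * real (card (Q m))) + 1)
      \<le> K0 + (real m + 2) + sqrt 2 * sqrt (ln (n m))" for m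
  proof -
    have pos: "0 < 2 * C" using C1 by simp
    have "2 * C * real (card (Q m)) \<le> 2 * C * ((real m + 2) * n m)\<^sup>2"
      using Q_card[of m] pos by (intro mult_left_mono) (auto simp: n_def add.commute)
    then have "ln (2 * C * real (card (Q m))) \<le> ln (2 * C * ((real m + 2) * n m)\<^sup>2)"
      using cardQ1[of m] pos n1[of m] by (subst ln_le_cancel_iff) auto
    also have "\<dots> = ln (2 * C) + 2 * ln (real m + 2) + 2 * ln (n m)"
      using pos n1[of m] by (simp add: ln_mult ln_realpow power_mult_distrib)
    finally have l: "ln (2 * C * real (card (Q m))) + 1 \<le> (ln (2 * C) + 1) + 2 * ln (real m + 2) + 2 * ln (n m)"
      by simp
    have a0: "0 \<le> ln (2 * C) + 1" using C2 by simp
    have b0: "0 \<le> 2 * ln (real m + 2)" by simp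
    have c0: "0 \<le> 2 * ln (n m)" using n1[of m] by simp
    have "sqrt (ln (2 * C * real (card (Q m))) + 1) \<le> sqrt ((ln (2 * C) + 1) + 2 * ln (real m + 2) + 2 * ln (n m))"
      using l by (rule real_sqrt_le_mono)
    also have "\<dots> \<le> sqrt ((ln (2 * C) + 1) + 2 * ln (real m + 2)) + sqrt (2 * ln (n m))"
      using a0 b0 c0 by (intro sqrt_add_le_add_sqrt) auto
    also have "sqrt ((ln (2 * C) + 1) + 2 * ln (real m + 2)) \<le> K0 + sqrt (2 * ln (real m + 2))"
      unfolding K0_def using a0 b0 by (intro sqrt_add_le_add_sqrt) auto
    also have "sqrt (2 * ln (real m + 2)) \<le> real m + 2" by (rule sqrt_ln_bound) simp
    also have "sqrt (2 * ln (n m)) = sqrt 2 * sqrt (ln (n m))" by (simp add: real_sqrt_mult)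
    finally show ?thesis by simp
  qed
  have s1: "summable (\<lambda>m. 5 * K0 * eps m)" by (intro summable_mult summable_eps)
  have s2: "summable (\<lambda>m. 5 * (eps m * (real m + 2)))" by (intro summable_mult summable_eps_lin)
  have s3: "summable (\<lambda>m. 10 * sqrt 2 * (eps (Suc m) * sqrt (ln (n m))))"
  proof -
    have "summable (\<lambda>m. eps (Suc m) * sqrt (ln (real (Ncov (eps (Suc m))))))"
      using summable_Suc_iff[of "\<lambda>m. eps m * sqrt (ln (real (Ncov (eps m))))"] dudley_summable by simp
    then show ?thesis unfolding n_def by (intro summable_mult)
  qed
  have "summable (\<lambda>m. 5 * K0 * eps m + 5 * (eps m * (real m + 2)) + 10 * sqrt 2 * (eps (Suc m) * sqrt (ln (n m))))"
    by (intro summable_add s1 s2 s3)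
  then show ?thesis
  proof (rule summable_comparison_test'[where N = 0])
    fix m :: nat
    have nn: "0 \<le> sqrt (ln (2 * C * real (card (Q m))) + 1)"
    proof -
      have "1 * 1 \<le> 2 * C * real (card (Q m))" using cardQ1[of m] C2 by (intro mult_mono) auto
      then have "0 \<le> ln (2 * C * real (card (Q m)))" by simp
      then show ?thesis by simp
    qed
    have "5 * eps m * sqrt (ln (2 * C * real (card (Q m))) + 1) \<le> 5 * eps m * (K0 + (real m + 2) + sqrt 2 * sqrt (ln (n m)))"
      using bound[of m] eps_pos[of m] by (intro mult_left_mono) auto
    also have "\<dots> = 5 * K0 * eps m + 5 * (eps m * (real m + 2)) + 10 * sqrt 2 * (eps (Suc m) * sqrt (ln (n m)))"
      by (simp add: eps_Suc field_simps)
    finally show "norm (5 * eps m * sqrt (ln (2 * C * real (card (Q m))) + 1))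
        \<le> 5 * K0 * eps m + 5 * (eps m * (real m + 2)) + 10 * sqrt 2 * (eps (Suc m) * sqrt (ln (n m)))"
      using nn eps_pos[of m] by (simp add: abs_mult)
  qed
qed

end


context dudley_setup begin

definition "Zp q \<omega> = X (fst q) \<omega> - X (snd q) \<omega>"
definition "Dm m \<omega> = (MAX q\<in>Q m. \<bar>Zp q \<omega>\<bar>)"

lemma Zp_meas: "q \<in> Q m \<Longrightarrow> Zp q \<in> borel_measurable M"
proof -
  assume q: "q \<in> Q m"
  have "X (fst q) \<in> borel_measurable M" "X (snd q) \<in> borel_measurable M"
    using Q_Theta[OF q] Xmeas by auto
  then show ?thesis unfolding Zp_def by measurable
qed

lemma Dm_meas: "Dm m \<in> borel_measurable M"
  unfolding Dm_def by (intro borel_measurable_Max Q_finite) (use Zp_meas in measurable)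

lemma Dm_ge: "q \<in> Q m \<Longrightarrow> \<bar>Zp q \<omega>\<bar> \<le> Dm m \<omega>"
  unfolding Dm_def using Q_finite by (intro Max_ge) auto

lemma Dm_nonneg: "0 \<le> Dm m \<omega>"
proof -
  obtain q where "q \<in> Q m" using Q_ne by blast
  then show ?thesis using Dm_ge[of q m \<omega>] by linarith
qed

lemma expmom: "p > 0 \<Longrightarrow> \<exists>K. \<forall>N. (\<integral>\<^sup>+\<omega>. ennreal (exp (p * (\<Sum>m<N. Dm m \<omega>))) \<partial>M) \<le> ennreal K"
proof -
  assume p: "p > 0"
  have mgf1: "(\<integral>\<^sup>+\<omega>. ennreal (exp (l * Zp q \<omega>)) \<partial>M) \<le> ennreal (C * exp (l\<^sup>2 * (5 * eps m)\<^sup>2 / 2))"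
    if q: "q \<in> Q m" and l: "l > 0" for m q l
  proof -
    obtain u v where uv: "q = (u, v)" by (cases q)
    have uvT: "u \<in> \<Theta>" "v \<in> \<Theta>" using Q_Theta[OF q] uv by auto
    have duv: "d u v \<le> 5 * eps m" using q uv by (simp add: Q_def)
    have "(d u v)\<^sup>2 \<le> (5 * eps m)\<^sup>2" using duv d_nonneg[OF uvT] by (intro power_mono) auto
    then have "C * exp (l\<^sup>2 * (d u v)\<^sup>2 / 2) \<le> C * exp (l\<^sup>2 * (5 * eps m)\<^sup>2 / 2)"
      using C1 by (intro mult_left_mono) (auto intro: mult_left_mono divide_right_mono)
    then have "ennreal (C * exp (l\<^sup>2 * (d u v)\<^sup>2 / 2)) \<le> ennreal (C * exp (l\<^sup>2 * (5 * eps m)\<^sup>2 / 2))"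
      by (rule ennreal_leI)
    moreover have "(\<integral>\<^sup>+\<omega>. ennreal (exp (l * Zp q \<omega>)) \<partial>M) \<le> ennreal (C * exp (l\<^sup>2 * (d u v)\<^sup>2 / 2))"
      using mgf[OF uvT l] by (simp add: Zp_def uv)
    ultimately show ?thesis by (rule order.trans[rotated])
  qed
  have mgf2: "(\<integral>\<^sup>+\<omega>. ennreal (exp (l * - Zp q \<omega>)) \<partial>M) \<le> ennreal (C * exp (l\<^sup>2 * (5 * eps m)\<^sup>2 / 2))"
    if q: "q \<in> Q m" and l: "l > 0" for m q l
  proof -
    obtain u v where uv: "q = (u, v)" by (cases q)
    have uvT: "u \<in> \<Theta>" "v \<in> \<Theta>" using Q_Theta[OF q] uv by auto
    have duv: "d v u \<le> 5 * eps m" using q uv d_sym[OF uvT] by (simp add: Q_def)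
    have "(d v u)\<^sup>2 \<le> (5 * eps m)\<^sup>2" using duv d_nonneg[OF uvT(2,1)] by (intro power_mono) auto
    then have "C * exp (l\<^sup>2 * (d v u)\<^sup>2 / 2) \<le> C * exp (l\<^sup>2 * (5 * eps m)\<^sup>2 / 2)"
      using C1 by (intro mult_left_mono) (auto intro: mult_left_mono divide_right_mono)
    then have "ennreal (C * exp (l\<^sup>2 * (d v u)\<^sup>2 / 2)) \<le> ennreal (C * exp (l\<^sup>2 * (5 * eps m)\<^sup>2 / 2))"
      by (rule ennreal_leI)
    moreover have "(\<integral>\<^sup>+\<omega>. ennreal (exp (l * - Zp q \<omega>)) \<partial>M) \<le> ennreal (C * exp (l\<^sup>2 * (d v u)\<^sup>2 / 2))"
      using mgf[OF uvT(2,1) l] by (simp add: Zp_def uv)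
    ultimately show ?thesis by (rule order.trans[rotated])
  qed
  have sig: "\<And>m. 5 * eps m > 0" using eps_pos by simp
  show ?thesis unfolding Dm_def
    by (rule key_expmom[OF prob Q_finite Q_ne Zp_meas C1 sig mgf1 mgf2 Q_summable p])
qed

lemma psum_incseq: "incseq (\<lambda>N. ennreal (exp (p * (\<Sum>m<N. Dm m \<omega>))))" if "p > 0" for p \<omega>
proof (rule incseq_SucI)
  fix N
  have "(\<Sum>m<N. Dm m \<omega>) \<le> (\<Sum>m<Suc N. Dm m \<omega>)" using Dm_nonneg[of N \<omega>] by simp
  then show "ennreal (exp (p * (\<Sum>m<N. Dm m \<omega>))) \<le> ennreal (exp (p * (\<Sum>m<Suc N. Dm m \<omega>)))"
    using that by (intro ennreal_leI) (simp add: mult_left_mono)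
qed

lemma psum_meas: "(\<lambda>\<omega>. ennreal (exp (p * (\<Sum>m<N. Dm m \<omega>)))) \<in> borel_measurable M"
  using Dm_meas by measurable

lemma AE_summable: "AE \<omega> in M. summable (\<lambda>m. Dm m \<omega>)"
proof -
  obtain K where K: "\<And>N. (\<integral>\<^sup>+\<omega>. ennreal (exp (1 * (\<Sum>m<N. Dm m \<omega>))) \<partial>M) \<le> ennreal K"
    using expmom[of 1] by auto
  define F where "F N \<omega> = ennreal (exp (1 * (\<Sum>m<N. Dm m \<omega>)))" for N \<omega>
  have Fmeas: "F N \<in> borel_measurable M" for N unfolding F_def by (rule psum_meas)
  have Finc: "incseq (\<lambda>N. F N \<omega>)" for \<omega> unfolding F_def by (rule psum_incseq) simp
  have Finc': "incseq F" using Finc by (auto simp: incseq_def le_fun_def)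
  have "(\<integral>\<^sup>+\<omega>. (SUP N. F N \<omega>) \<partial>M) = (SUP N. \<integral>\<^sup>+\<omega>. F N \<omega> \<partial>M)"
    by (rule nn_integral_monotone_convergence_SUP[OF Finc' Fmeas])
  also have "\<dots> \<le> ennreal K" using K unfolding F_def by (intro SUP_least) auto
  finally have "(\<integral>\<^sup>+\<omega>. (SUP N. F N \<omega>) \<partial>M) \<noteq> \<infinity>"
    by (metis ennreal_less_top infinity_ennreal_def top.not_eq_extremum order.strict_trans1)
  then have "AE \<omega> in M. (SUP N. F N \<omega>) \<noteq> \<infinity>"
    by (intro nn_integral_noteq_infinite) (use Fmeas in measurable)
  then show ?thesis
  proof (rule AE_mp, intro AE_I2 impI)
    fix \<omega> assume fin: "(SUP N. F N \<omega>) \<noteq> \<infinity>"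
    define S where "S = enn2real (SUP N. F N \<omega>)"
    have "(\<Sum>m<N. Dm m \<omega>) \<le> ln S" for N
    proof -
      have le: "F N \<omega> \<le> (SUP N. F N \<omega>)" by (rule SUP_upper) simp
      have "enn2real (F N \<omega>) \<le> S" unfolding S_def
      proof (rule enn2real_mono[OF le])
        show "(SUP N. F N \<omega>) < \<top>" using fin by (simp only: less_top infinity_ennreal_def)
      qed
      then have e: "exp (\<Sum>m<N. Dm m \<omega>) \<le> S" by (simp add: F_def)
      have S0: "0 < S" using e by (rule less_le_trans[OF exp_gt_zero])
      have "ln (exp (\<Sum>m<N. Dm m \<omega>)) \<le> ln S" using e S0 by (subst ln_le_cancel_iff) auto
      then show ?thesis by simp
    qed
    then show "summable (\<lambda>m. Dm m \<omega>)"
      by (intro summableI_nonneg_bounded[where x = "ln S"] Dm_nonneg)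
  qed
qed

definition "N0 = (SOME N. N \<in> sets M \<and> emeasure M N = 0 \<and> {\<omega> \<in> space M. \<not> summable (\<lambda>m. Dm m \<omega>)} \<subseteq> N)"

lemma N0: "N0 \<in> sets M \<and> emeasure M N0 = 0 \<and> {\<omega> \<in> space M. \<not> summable (\<lambda>m. Dm m \<omega>)} \<subseteq> N0"
proof -
  obtain N where "{\<omega> \<in> space M. \<not> summable (\<lambda>m. Dm m \<omega>)} \<subseteq> N" "emeasure M N = 0" "N \<in> sets M"
    using AE_summable by (rule AE_E)
  then have "\<exists>N. N \<in> sets M \<and> emeasure M N = 0 \<and> {\<omega> \<in> space M. \<not> summable (\<lambda>m. Dm m \<omega>)} \<subseteq> N"
    by blast
  then show ?thesis unfolding N0_def by (rule someI_ex)
qed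

definition "Good = space M - N0"

lemma Good_sets: "Good \<in> sets M" unfolding Good_def using N0 by (intro sets.Diff sets.top) auto
lemma Good_summable: "\<omega> \<in> Good \<Longrightarrow> summable (\<lambda>m. Dm m \<omega>)" using N0 by (auto simp: Good_def)
lemma AE_Good: "AE \<omega> in M. \<omega> \<in> Good"
proof -
  have "N0 \<in> null_sets M" using N0 by auto
  then have "AE \<omega> in M. \<omega> \<notin> N0" by (rule AE_not_in)
  then show ?thesis using AE_space by eventually_elim (auto simp: Good_def)
qed

definition "U \<omega> = (\<Sum>m. Dm m \<omega>)"

lemma U_meas: "U \<in> borel_measurable M"
  unfolding U_def using Dm_meas by (rule borel_measurable_suminf)

lemma U_expmom: "p > 0 \<Longrightarrow> (\<integral>\<^sup>+\<omega>. ennreal (exp (p * U \<omega>)) \<partial>M) < \<infinity>"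
proof -
  assume p: "p > 0"
  obtain K where K: "\<And>N. (\<integral>\<^sup>+\<omega>. ennreal (exp (p * (\<Sum>m<N. Dm m \<omega>))) \<partial>M) \<le> ennreal K"
    using expmom[OF p] by auto
  define F where "F N \<omega> = ennreal (exp (p * (\<Sum>m<N. Dm m \<omega>)))" for N \<omega>
  have Fmeas: "F N \<in> borel_measurable M" for N unfolding F_def by (rule psum_meas)
  have Finc: "incseq (\<lambda>N. F N \<omega>)" for \<omega> unfolding F_def by (rule psum_incseq[OF p])
  have Finc': "incseq F" using Finc by (auto simp: incseq_def le_fun_def)
  have ae: "AE \<omega> in M. ennreal (exp (p * U \<omega>)) = (SUP N. F N \<omega>)"
    using AE_Good
  proof (rule AE_mp, intro AE_I2 impI)
    fix \<omega> assume "\<omega> \<in> Good"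
    then have sm: "summable (\<lambda>m. Dm m \<omega>)" by (rule Good_summable)
    have "(\<lambda>N. F N \<omega>) \<longlonglongrightarrow> ennreal (exp (p * U \<omega>))"
      unfolding F_def U_def
      by (intro tendsto_ennrealI tendsto_exp tendsto_mult tendsto_const summable_LIMSEQ sm)
    moreover have "(\<lambda>N. F N \<omega>) \<longlonglongrightarrow> (SUP N. F N \<omega>)" by (rule LIMSEQ_SUP[OF Finc])
    ultimately show "ennreal (exp (p * U \<omega>)) = (SUP N. F N \<omega>)" by (rule LIMSEQ_unique)
  qed
  have "(\<integral>\<^sup>+\<omega>. ennreal (exp (p * U \<omega>)) \<partial>M) = (\<integral>\<^sup>+\<omega>. (SUP N. F N \<omega>) \<partial>M)"
    by (rule nn_integral_cong_AE[OF ae])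
  also have "\<dots> = (SUP N. \<integral>\<^sup>+\<omega>. F N \<omega> \<partial>M)"
    by (rule nn_integral_monotone_convergence_SUP[OF Finc' Fmeas])
  also have "\<dots> \<le> ennreal K" using K unfolding F_def by (intro SUP_least) auto
  also have "\<dots> < \<infinity>" by simp
  finally show ?thesis .
qed

end


context dudley_setup begin

lemma chain: "m \<le> K \<Longrightarrow> s \<in> B K \<Longrightarrow>
   \<exists>u\<in>B m. d s u \<le> 2 * eps m - 2 * eps K \<and> \<bar>X s \<omega> - X u \<omega>\<bar> \<le> (\<Sum>k\<in>{m..<K}. Dm k \<omega>)"
proof (induction K arbitrary: s)
  case 0
  then have "m = 0" by simp
  moreover have "s \<in> \<Theta>" using 0 B_sub by blast
  ultimately show ?case using 0 d_refl by (intro bexI[of _ s]) auto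
next
  case (Suc K)
  show ?case
  proof (cases "m = Suc K")
    case True
    have "s \<in> \<Theta>" using Suc B_sub by blast
    then show ?thesis using True Suc d_refl by (intro bexI[of _ s]) auto
  next
    case False
    then have mK: "m \<le> K" using Suc by simp
    have sT: "s \<in> \<Theta>" using Suc B_sub by blast
    define s' where "s' = proj K s"
    have s': "s' \<in> B K" "d s' s < eps K" using proj[OF sT] by (auto simp: s'_def)
    have s'T: "s' \<in> \<Theta>" using s' B_sub by blast
    obtain u where u: "u \<in> B m" "d s' u \<le> 2 * eps m - 2 * eps K"
       "\<bar>X s' \<omega> - X u \<omega>\<bar> \<le> (\<Sum>k\<in>{m..<K}. Dm k \<omega>)"
      using Suc.IH[OF mK s'(1)] by blast
    have uT: "u \<in> \<Theta>" using u B_sub by blast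
    have "(s, s') \<in> Q K"
    proof -
      have "s' \<in> B (Suc K)" using s' B_mono[of K "Suc K"] by auto
      moreover have "d s s' \<le> 5 * eps K" using s' d_sym[OF sT s'T] eps_pos[of K] by simp
      ultimately show ?thesis using Suc by (simp add: Q_def)
    qed
    then have "\<bar>X s \<omega> - X s' \<omega>\<bar> \<le> Dm K \<omega>" using Dm_ge[of "(s, s')" K \<omega>] by (simp add: Zp_def)
    have "d s u \<le> d s s' + d s' u" by (rule d_tri[OF sT s'T uT])
    also have "\<dots> \<le> eps K + (2 * eps m - 2 * eps K)" using s' u d_sym[OF sT s'T] by simp
    also have "\<dots> = 2 * eps m - 2 * eps (Suc K)" by (simp add: eps_Suc)
    finally have du: "d s u \<le> 2 * eps m - 2 * eps (Suc K)" .
    have "\<bar>X s \<omega> - X u \<omega>\<bar> \<le> \<bar>X s \<omega> - X s' \<omega>\<bar> + \<bar>X s' \<omega> - X u \<omega>\<bar>" by simp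
    also have "\<dots> \<le> Dm K \<omega> + (\<Sum>k\<in>{m..<K}. Dm k \<omega>)"
      using \<open>\<bar>X s \<omega> - X s' \<omega>\<bar> \<le> Dm K \<omega>\<close> u(3) by simp
    also have "\<dots> = (\<Sum>k\<in>{m..<Suc K}. Dm k \<omega>)" using mK by simp
    finally show ?thesis using u(1) du by blast
  qed
qed

definition "tail m \<omega> = U \<omega> - (\<Sum>k<m. Dm k \<omega>)"

lemma psum_le_U: "summable (\<lambda>m. Dm m \<omega>) \<Longrightarrow> (\<Sum>k<m. Dm k \<omega>) \<le> U \<omega>"
  unfolding U_def by (rule sum_le_suminf) (auto simp: Dm_nonneg)

lemma seg_le_tail: "summable (\<lambda>m. Dm m \<omega>) \<Longrightarrow> m \<le> K \<Longrightarrow> (\<Sum>k\<in>{m..<K}. Dm k \<omega>) \<le> tail m \<omega>"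
proof -
  assume sm: "summable (\<lambda>m. Dm m \<omega>)" and mK: "m \<le> K"
  have "(\<Sum>k\<in>{0..<m}. Dm k \<omega>) + (\<Sum>k\<in>{m..<K}. Dm k \<omega>) = (\<Sum>k\<in>{0..<K}. Dm k \<omega>)"
    by (rule sum.atLeastLessThan_concat) (use mK in auto)
  then have "(\<Sum>k\<in>{m..<K}. Dm k \<omega>) = (\<Sum>k<K. Dm k \<omega>) - (\<Sum>k<m. Dm k \<omega>)"
    by (simp add: atLeast0LessThan)
  then show ?thesis using psum_le_U[OF sm, of K] by (simp add: tail_def)
qed

lemma tail_lim: "summable (\<lambda>m. Dm m \<omega>) \<Longrightarrow> (\<lambda>m. tail m \<omega>) \<longlonglongrightarrow> 0"
proof -
  assume sm: "summable (\<lambda>m. Dm m \<omega>)"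
  have "(\<lambda>m. U \<omega> - (\<Sum>k<m. Dm k \<omega>)) \<longlonglongrightarrow> U \<omega> - U \<omega>"
    unfolding U_def by (intro tendsto_diff tendsto_const summable_LIMSEQ sm)
  then show ?thesis by (simp add: tail_def)
qed

lemma S_bound: "summable (\<lambda>m. Dm m \<omega>) \<Longrightarrow> s \<in> S \<Longrightarrow> \<bar>X s \<omega> - X \<theta>0 \<omega>\<bar> \<le> U \<omega>"
proof -
  assume sm: "summable (\<lambda>m. Dm m \<omega>)" and s: "s \<in> S"
  then obtain K where K: "s \<in> B K" by (auto simp: S_def)
  obtain u where "u \<in> B 0" "\<bar>X s \<omega> - X u \<omega>\<bar> \<le> (\<Sum>k\<in>{0..<K}. Dm k \<omega>)"
    using chain[OF _ K, of 0 \<omega>] by auto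
  then show ?thesis using psum_le_U[OF sm, of K] B_0 by (simp add: atLeast0LessThan)
qed

lemma S_uc: "summable (\<lambda>m. Dm m \<omega>) \<Longrightarrow> \<eta> > 0 \<Longrightarrow>
   \<exists>\<delta>>0. \<forall>s\<in>S. \<forall>t\<in>S. d s t < \<delta> \<longrightarrow> \<bar>X s \<omega> - X t \<omega>\<bar> \<le> \<eta>"
proof -
  assume sm: "summable (\<lambda>m. Dm m \<omega>)" and eta: "\<eta> > 0"
  have "eventually (\<lambda>m. tail m \<omega> < \<eta> / 3) sequentially"
    using tail_lim[OF sm] eta by (intro order_tendstoD) auto
  then obtain m where m: "tail m \<omega> < \<eta> / 3" by (auto simp: eventually_sequentially)
  have "\<bar>X s \<omega> - X t \<omega>\<bar> \<le> \<eta>" if s: "s \<in> S" and t: "t \<in> S" and dst: "d s t < eps m" for s t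
  proof -
    obtain K1 K2 where K12: "s \<in> B K1" "t \<in> B K2" using s t by (auto simp: S_def)
    define K where "K = max (max K1 K2) m"
    have k1: "K1 \<le> K" and k2: "K2 \<le> K" and mK: "m \<le> K" by (auto simp: K_def)
    have sK: "s \<in> B K" using K12(1) B_mono[OF k1] by blast
    have tK: "t \<in> B K" using K12(2) B_mono[OF k2] by blast
    obtain u where u: "u \<in> B m" "d s u \<le> 2 * eps m - 2 * eps K"
        "\<bar>X s \<omega> - X u \<omega>\<bar> \<le> (\<Sum>k\<in>{m..<K}. Dm k \<omega>)"
      using chain[OF mK sK] by blast
    obtain v where v: "v \<in> B m" "d t v \<le> 2 * eps m - 2 * eps K"
        "\<bar>X t \<omega> - X v \<omega>\<bar> \<le> (\<Sum>k\<in>{m..<K}. Dm k \<omega>)"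
      using chain[OF mK tK] by blast
    have sT: "s \<in> \<Theta>" and tT: "t \<in> \<Theta>" using s t S_sub by auto
    have uT: "u \<in> \<Theta>" and vT: "v \<in> \<Theta>" using u v B_sub by auto
    have "d u v \<le> d u s + d s v" by (rule d_tri[OF uT sT vT])
    also have "d s v \<le> d s t + d t v" by (rule d_tri[OF sT tT vT])
    finally have "d u v \<le> d s u + d s t + d t v" using d_sym[OF uT sT] by simp
    also have "\<dots> \<le> 5 * eps m" using u(2) v(2) dst eps_pos[of K] by simp
    finally have "(u, v) \<in> Q m" using u(1) v(1) B_mono[of m "Suc m"] by (auto simp: Q_def)
    then have uv: "\<bar>X u \<omega> - X v \<omega>\<bar> \<le> Dm m \<omega>" using Dm_ge[of "(u, v)" m \<omega>] by (simp add: Zp_def)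
    have Dt: "Dm m \<omega> \<le> tail m \<omega>" using seg_le_tail[OF sm, of m "Suc m"] by simp
    have st: "(\<Sum>k\<in>{m..<K}. Dm k \<omega>) \<le> tail m \<omega>" by (rule seg_le_tail[OF sm mK])
    have "\<bar>X s \<omega> - X t \<omega>\<bar> \<le> \<bar>X s \<omega> - X u \<omega>\<bar> + \<bar>X u \<omega> - X v \<omega>\<bar> + \<bar>X t \<omega> - X v \<omega>\<bar>" by simp
    also have "\<dots> \<le> 3 * tail m \<omega>" using u(3) v(3) uv Dt st by simp
    finally show ?thesis using m by simp
  qed
  then show ?thesis using eps_pos[of m] by blast
qed

end


context dudley_setup begin

definition "Y \<theta> \<omega> = (if \<omega> \<in> Good then lim (\<lambda>n. X (proj n \<theta>) \<omega>) else 0)"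

lemma eps_small: "\<delta> > 0 \<Longrightarrow> \<exists>N. \<forall>n\<ge>N. eps n < \<delta>"
proof -
  assume "\<delta> > 0"
  have "eps \<longlonglongrightarrow> 0" by (rule summable_LIMSEQ_zero[OF summable_eps])
  then have "eventually (\<lambda>n. eps n < \<delta>) sequentially" using \<open>\<delta> > 0\<close> by (intro order_tendstoD)
  then show ?thesis by (simp add: eventually_sequentially)
qed

lemma proj_S: "\<theta> \<in> \<Theta> \<Longrightarrow> proj n \<theta> \<in> S" using proj[of \<theta> n] by (auto simp: S_def)

lemma Y_conv: "\<omega> \<in> Good \<Longrightarrow> \<theta> \<in> \<Theta> \<Longrightarrow> (\<lambda>n. X (proj n \<theta>) \<omega>) \<longlonglongrightarrow> Y \<theta> \<omega>"
proof -
  assume g: "\<omega> \<in> Good" and th: "\<theta> \<in> \<Theta>"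
  have sm: "summable (\<lambda>m. Dm m \<omega>)" by (rule Good_summable[OF g])
  have "Cauchy (\<lambda>n. X (proj n \<theta>) \<omega>)"
    unfolding Cauchy_def
  proof (intro allI impI)
    fix e :: real assume e: "e > 0"
    obtain \<delta> where \<delta>: "\<delta> > 0" "\<forall>s\<in>S. \<forall>t\<in>S. d s t < \<delta> \<longrightarrow> \<bar>X s \<omega> - X t \<omega>\<bar> \<le> e / 2"
      using S_uc[OF sm, of "e/2"] e by auto
    obtain N where N: "\<forall>n\<ge>N. eps n < \<delta> / 2" using eps_small[of "\<delta>/2"] \<delta>(1) by auto
    have "dist (X (proj m \<theta>) \<omega>) (X (proj n \<theta>) \<omega>) < e" if "m \<ge> N" "n \<ge> N" for m n
    proof -
      have pm: "proj m \<theta> \<in> \<Theta>" "d (proj m \<theta>) \<theta> < eps m" using proj[OF th, of m] proj_in[OF th] by auto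
      have pn: "proj n \<theta> \<in> \<Theta>" "d (proj n \<theta>) \<theta> < eps n" using proj[OF th, of n] proj_in[OF th] by auto
      have "d (proj m \<theta>) (proj n \<theta>) \<le> d (proj m \<theta>) \<theta> + d \<theta> (proj n \<theta>)"
        by (rule d_tri[OF pm(1) th pn(1)])
      also have "\<dots> < \<delta>"
      proof -
        have "eps m < \<delta> / 2" "eps n < \<delta> / 2" using N that by auto
        then show ?thesis using pm pn d_sym[OF th pn(1)] by linarith
      qed
      finally have "\<bar>X (proj m \<theta>) \<omega> - X (proj n \<theta>) \<omega>\<bar> \<le> e / 2"
        using \<delta>(2) proj_S[OF th] by blast
      then show ?thesis using e by (simp add: dist_real_def)
    qed
    then show "\<exists>M. \<forall>m\<ge>M. \<forall>n\<ge>M. dist (X (proj m \<theta>) \<omega>) (X (proj n \<theta>) \<omega>) < e" by blast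
  qed
  then have "(\<lambda>n. X (proj n \<theta>) \<omega>) \<longlonglongrightarrow> lim (\<lambda>n. X (proj n \<theta>) \<omega>)"
    by (simp add: Cauchy_convergent_iff convergent_LIMSEQ_iff)
  then show ?thesis using g by (simp add: Y_def)
qed

lemma S_conv: "\<omega> \<in> Good \<Longrightarrow> s \<in> S \<Longrightarrow> (\<lambda>n. X (proj n s) \<omega>) \<longlonglongrightarrow> X s \<omega>"
proof -
  assume g: "\<omega> \<in> Good" and s: "s \<in> S"
  have sm: "summable (\<lambda>m. Dm m \<omega>)" by (rule Good_summable[OF g])
  have sT: "s \<in> \<Theta>" using s S_sub by blast
  show ?thesis
  proof (rule LIMSEQ_I)
    fix r :: real assume r: "r > 0"
    obtain \<delta> where \<delta>: "\<delta> > 0" "\<forall>s\<in>S. \<forall>t\<in>S. d s t < \<delta> \<longrightarrow> \<bar>X s \<omega> - X t \<omega>\<bar> \<le> r / 2"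
      using S_uc[OF sm, of "r/2"] r by auto
    obtain N where N: "\<forall>n\<ge>N. eps n < \<delta>" using eps_small[OF \<delta>(1)] by auto
    have "norm (X (proj n s) \<omega> - X s \<omega>) < r" if "n \<ge> N" for n
    proof -
      have "d (proj n s) s < \<delta>" using proj[OF sT, of n] N that by force
      then have "\<bar>X (proj n s) \<omega> - X s \<omega>\<bar> \<le> r / 2" using \<delta>(2) proj_S[OF sT] s by blast
      then show ?thesis using r by simp
    qed
    then show "\<exists>no. \<forall>n\<ge>no. norm (X (proj n s) \<omega> - X s \<omega>) < r" by blast
  qed
qed

lemma Y_S: "\<omega> \<in> Good \<Longrightarrow> s \<in> S \<Longrightarrow> Y s \<omega> = X s \<omega>"
  using LIMSEQ_unique[OF Y_conv S_conv] S_sub by blast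

lemma root_S: "\<theta>0 \<in> S" using root_B[of 0] by (auto simp: S_def)

lemma Y_bound: "\<omega> \<in> Good \<Longrightarrow> \<theta> \<in> \<Theta> \<Longrightarrow> \<bar>Y \<theta> \<omega> - Y \<theta>0 \<omega>\<bar> \<le> U \<omega>"
proof -
  assume g: "\<omega> \<in> Good" and th: "\<theta> \<in> \<Theta>"
  have sm: "summable (\<lambda>m. Dm m \<omega>)" by (rule Good_summable[OF g])
  have "(\<lambda>n. \<bar>X (proj n \<theta>) \<omega> - X \<theta>0 \<omega>\<bar>) \<longlonglongrightarrow> \<bar>Y \<theta> \<omega> - X \<theta>0 \<omega>\<bar>"
    by (intro tendsto_intros Y_conv[OF g th])
  moreover have "\<forall>n\<ge>0. \<bar>X (proj n \<theta>) \<omega> - X \<theta>0 \<omega>\<bar> \<le> U \<omega>"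
    using S_bound[OF sm proj_S[OF th]] by blast
  ultimately have "\<bar>Y \<theta> \<omega> - X \<theta>0 \<omega>\<bar> \<le> U \<omega>" by (intro LIMSEQ_le_const2) blast+
  then show ?thesis using Y_S[OF g root_S] by simp
qed

lemma Y_uc: "\<omega> \<in> Good \<Longrightarrow> uniformly_continuous_wrt \<Theta> d (\<lambda>\<theta>. Y \<theta> \<omega>)"
  unfolding uniformly_continuous_wrt_def
proof (intro allI impI)
  fix e :: real assume g: "\<omega> \<in> Good" and e: "e > 0"
  have sm: "summable (\<lambda>m. Dm m \<omega>)" by (rule Good_summable[OF g])
  obtain \<delta> where \<delta>: "\<delta> > 0" "\<forall>s\<in>S. \<forall>t\<in>S. d s t < \<delta> \<longrightarrow> \<bar>X s \<omega> - X t \<omega>\<bar> \<le> e / 2"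
    using S_uc[OF sm, of "e/2"] e by auto
  obtain N where N: "\<forall>n\<ge>N. eps n < \<delta> / 4" using eps_small[of "\<delta>/4"] \<delta>(1) by auto
  have "\<bar>Y s \<omega> - Y t \<omega>\<bar> < e" if s: "s \<in> \<Theta>" and t: "t \<in> \<Theta>" and dst: "d s t < \<delta> / 2" for s t
  proof -
    have "\<bar>X (proj n s) \<omega> - X (proj n t) \<omega>\<bar> \<le> e / 2" if n: "n \<ge> N" for n
    proof -
      have ps: "proj n s \<in> \<Theta>" "d (proj n s) s < eps n" using proj[OF s, of n] proj_in[OF s] by auto
      have pt: "proj n t \<in> \<Theta>" "d (proj n t) t < eps n" using proj[OF t, of n] proj_in[OF t] by auto
      have "d (proj n s) (proj n t) \<le> d (proj n s) s + d s (proj n t)" by (rule d_tri[OF ps(1) s pt(1)])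
      also have "d s (proj n t) \<le> d s t + d t (proj n t)" by (rule d_tri[OF s t pt(1)])
      finally have "d (proj n s) (proj n t) \<le> d (proj n s) s + d s t + d (proj n t) t"
        using d_sym[OF t pt(1)] by simp
      also have "\<dots> < \<delta>" using ps pt dst N n by force
      finally show ?thesis using \<delta>(2) proj_S[OF s] proj_S[OF t] by blast
    qed
    moreover have "(\<lambda>n. \<bar>X (proj n s) \<omega> - X (proj n t) \<omega>\<bar>) \<longlonglongrightarrow> \<bar>Y s \<omega> - Y t \<omega>\<bar>"
      by (intro tendsto_intros Y_conv[OF g s] Y_conv[OF g t])
    ultimately have "\<bar>Y s \<omega> - Y t \<omega>\<bar> \<le> e / 2" by (intro LIMSEQ_le_const2) blast+
    then show ?thesis using e by simp
  qed
  then show "\<exists>\<delta>>0. \<forall>s\<in>\<Theta>. \<forall>t\<in>\<Theta>. d s t < \<delta> \<longrightarrow> \<bar>Y s \<omega> - Y t \<omega>\<bar> < e"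
    using \<delta>(1) by (intro exI[of _ "\<delta>/2"]) auto
qed

lemma Y_meas: "\<theta> \<in> \<Theta> \<Longrightarrow> Y \<theta> \<in> borel_measurable M"
proof -
  assume th: "\<theta> \<in> \<Theta>"
  define f where "f n \<omega> = (if \<omega> \<in> Good then X (proj n \<theta>) \<omega> else 0)" for n \<omega>
  have fm: "f n \<in> borel_measurable M" for n
  proof -
    have "X (proj n \<theta>) \<in> borel_measurable M" using Xmeas proj_in[OF th] by blast
    then show ?thesis unfolding f_def using Good_sets
      by (intro measurable_If_set) auto
  qed
  have "(\<lambda>n. f n \<omega>) \<longlonglongrightarrow> Y \<theta> \<omega>" for \<omega>
  proof (cases "\<omega> \<in> Good")
    case True
    have "(\<lambda>n. f n \<omega>) = (\<lambda>n. X (proj n \<theta>) \<omega>)" using True by (simp add: f_def)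
    then show ?thesis using Y_conv[OF True th] by simp
  next
    case False
    then show ?thesis by (simp add: f_def Y_def)
  qed
  then show ?thesis by (intro borel_measurable_LIMSEQ_metric[OF fm])
qed

end


context dudley_setup begin

lemma L1: "u \<in> \<Theta> \<Longrightarrow> v \<in> \<Theta> \<Longrightarrow> (\<integral>\<^sup>+\<omega>. ennreal \<bar>X u \<omega> - X v \<omega>\<bar> \<partial>M) \<le> ennreal (6 * C * d u v)"
proof -
  assume uT: "u \<in> \<Theta>" and vT: "v \<in> \<Theta>"
  define dd where "dd = d u v"
  have dd0: "0 \<le> dd" using d_nonneg[OF uT vT] by (simp add: dd_def)
  have ddsym: "d v u = dd" using d_sym[OF uT vT] by (simp add: dd_def)
  show ?thesis
  proof (rule ennreal_le_epsilon)
    fix e :: real assume e: "0 < e"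
    define \<eta> where "\<eta> = e / (6 * C)"
    have \<eta>: "\<eta> > 0" using e C1 by (simp add: \<eta>_def)
    define l where "l = 1 / (dd + \<eta>)"
    have l: "l > 0" using dd0 \<eta> by (simp add: l_def)
    have ldd: "l * (dd + \<eta>) = 1" using dd0 \<eta> by (simp add: l_def)
    have ld1: "l * dd \<le> 1" using ldd \<eta> l by (simp add: distrib_left) (smt (verit) mult_pos_pos)
    have pw: "ennreal \<bar>X u \<omega> - X v \<omega>\<bar> \<le> ennreal (dd + \<eta>) *
        (ennreal (exp (l * (X u \<omega> - X v \<omega>))) + ennreal (exp (l * (X v \<omega> - X u \<omega>))))" for \<omega>
    proof -
      define z where "z = X u \<omega> - X v \<omega>"
      have "(dd + \<eta>) * (l * \<bar>z\<bar>) = (l * (dd + \<eta>)) * \<bar>z\<bar>" by (simp only: mult_ac)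
      then have "\<bar>z\<bar> = (dd + \<eta>) * (l * \<bar>z\<bar>)" using ldd by simp
      also have "l * \<bar>z\<bar> \<le> exp (l * \<bar>z\<bar>)" using exp_ge_add_one_self[of "l * \<bar>z\<bar>"] by linarith
      also have "exp (l * \<bar>z\<bar>) \<le> exp (l * z) + exp (l * (- z))"
        by (cases "z \<ge> 0") (auto simp: add_increasing add_increasing2)
      finally have "\<bar>z\<bar> \<le> (dd + \<eta>) * (exp (l * z) + exp (l * (- z)))"
        using dd0 \<eta> by (simp add: mult_left_mono)
      then have "ennreal \<bar>z\<bar> \<le> ennreal ((dd + \<eta>) * (exp (l * z) + exp (l * (- z))))" by (rule ennreal_leI)
      also have "\<dots> = ennreal (dd + \<eta>) * (ennreal (exp (l * z)) + ennreal (exp (l * (- z))))"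
        using dd0 \<eta> by (simp add: ennreal_mult ennreal_plus[symmetric] del: ennreal_plus)
      finally show ?thesis by (simp add: z_def)
    qed
    have m1: "(\<lambda>\<omega>. ennreal (exp (l * (X u \<omega> - X v \<omega>)))) \<in> borel_measurable M"
      using Xmeas[OF uT] Xmeas[OF vT] by measurable
    have m2: "(\<lambda>\<omega>. ennreal (exp (l * (X v \<omega> - X u \<omega>)))) \<in> borel_measurable M"
      using Xmeas[OF uT] Xmeas[OF vT] by measurable
    have bnd3: "C * exp (l\<^sup>2 * dd\<^sup>2 / 2) \<le> 3 * C"
    proof -
      have "l\<^sup>2 * dd\<^sup>2 = (l * dd)\<^sup>2" by (simp add: power_mult_distrib)
      also have "\<dots> \<le> 1" using ld1 l dd0 by (simp add: power_le_one)
      finally have "exp (l\<^sup>2 * dd\<^sup>2 / 2) \<le> exp 1" by simp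
      also have "\<dots> \<le> 3" by (rule exp_le)
      finally show ?thesis using C1 by simp
    qed
    have "(\<integral>\<^sup>+\<omega>. ennreal \<bar>X u \<omega> - X v \<omega>\<bar> \<partial>M) \<le> (\<integral>\<^sup>+\<omega>. ennreal (dd + \<eta>) *
        (ennreal (exp (l * (X u \<omega> - X v \<omega>))) + ennreal (exp (l * (X v \<omega> - X u \<omega>)))) \<partial>M)"
      by (intro nn_integral_mono pw)
    also have "\<dots> = ennreal (dd + \<eta>) * ((\<integral>\<^sup>+\<omega>. ennreal (exp (l * (X u \<omega> - X v \<omega>))) \<partial>M)
        + (\<integral>\<^sup>+\<omega>. ennreal (exp (l * (X v \<omega> - X u \<omega>))) \<partial>M))"
      using m1 m2 by (simp add: nn_integral_cmult nn_integral_add)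
    also have "\<dots> \<le> ennreal (dd + \<eta>) * (ennreal (3 * C) + ennreal (3 * C))"
    proof (intro mult_left_mono add_mono)
      show "(\<integral>\<^sup>+\<omega>. ennreal (exp (l * (X u \<omega> - X v \<omega>))) \<partial>M) \<le> ennreal (3 * C)"
        using mgf[OF uT vT l] ennreal_leI[OF bnd3] by (simp add: dd_def)
      show "(\<integral>\<^sup>+\<omega>. ennreal (exp (l * (X v \<omega> - X u \<omega>))) \<partial>M) \<le> ennreal (3 * C)"
        using mgf[OF vT uT l] ennreal_leI[OF bnd3] ddsym by simp
    qed simp
    also have "\<dots> = ennreal (6 * C * dd + e)"
    proof -
      have "(dd + \<eta>) * (3 * C + 3 * C) = 6 * C * dd + e" using C1 by (simp add: \<eta>_def field_simps)
      moreover have "ennreal (3 * C) + ennreal (3 * C) = ennreal (3 * C + 3 * C)"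
        using C1 by (intro ennreal_plus[symmetric]) auto
      moreover have "ennreal (dd + \<eta>) * ennreal (3 * C + 3 * C) = ennreal ((dd + \<eta>) * (3 * C + 3 * C))"
        using C1 dd0 \<eta> by (intro ennreal_mult[symmetric]) auto
      ultimately show ?thesis by (simp only:)
    qed
    also have "\<dots> = ennreal (6 * C * d u v) + ennreal e"
      using dd0 e C1 by (simp add: dd_def ennreal_plus)
    finally show "(\<integral>\<^sup>+\<omega>. ennreal \<bar>X u \<omega> - X v \<omega>\<bar> \<partial>M) \<le> ennreal (6 * C * d u v) + ennreal e" .
  qed
qed

lemma Y_ae: "\<theta> \<in> \<Theta> \<Longrightarrow> AE \<omega> in M. Y \<theta> \<omega> = X \<theta> \<omega>"
proof -
  assume th: "\<theta> \<in> \<Theta>"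
  define g where "g n \<omega> = ennreal \<bar>X (proj n \<theta>) \<omega> - X \<theta> \<omega>\<bar>" for n \<omega>
  have gm: "g n \<in> borel_measurable M" for n
    using Xmeas[OF proj_in[OF th, of n]] Xmeas[OF th] unfolding g_def by measurable
  have sg: "summable (\<lambda>n. 6 * C * eps n)" by (intro summable_mult summable_eps)
  have "(\<integral>\<^sup>+\<omega>. (\<Sum>n. g n \<omega>) \<partial>M) = (\<Sum>n. \<integral>\<^sup>+\<omega>. g n \<omega> \<partial>M)"
    by (rule nn_integral_suminf[OF gm])
  also have "\<dots> \<le> (\<Sum>n. ennreal (6 * C * eps n))"
  proof (intro suminf_le summableI)
    fix n
    have "(\<integral>\<^sup>+\<omega>. g n \<omega> \<partial>M) \<le> ennreal (6 * C * d (proj n \<theta>) \<theta>)"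
      unfolding g_def by (rule L1[OF proj_in[OF th] th])
    also have "\<dots> \<le> ennreal (6 * C * eps n)"
      using proj[OF th, of n] C1 by (intro ennreal_leI) simp
    finally show "(\<integral>\<^sup>+\<omega>. g n \<omega> \<partial>M) \<le> ennreal (6 * C * eps n)" .
  qed
  also have "\<dots> = ennreal (\<Sum>n. 6 * C * eps n)"
    by (rule suminf_ennreal2[OF _ sg]) (use C1 eps_pos in \<open>simp add: less_imp_le\<close>)
  finally have "(\<integral>\<^sup>+\<omega>. (\<Sum>n. g n \<omega>) \<partial>M) \<noteq> \<infinity>"
    by (metis ennreal_less_top infinity_ennreal_def top.not_eq_extremum order.strict_trans1)
  then have ae: "AE \<omega> in M. (\<Sum>n. g n \<omega>) \<noteq> \<infinity>"
    by (intro nn_integral_noteq_infinite) (use gm in measurable)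
  show ?thesis using ae AE_Good
  proof eventually_elim
    case (elim \<omega>)
    have "summable (\<lambda>n. \<bar>X (proj n \<theta>) \<omega> - X \<theta> \<omega>\<bar>)"
      by (rule summable_suminf_not_top) (use elim in \<open>auto simp: g_def infinity_ennreal_def\<close>)
    then have "(\<lambda>n. \<bar>X (proj n \<theta>) \<omega> - X \<theta> \<omega>\<bar>) \<longlonglongrightarrow> 0" by (rule summable_LIMSEQ_zero)
    then have "(\<lambda>n. X (proj n \<theta>) \<omega> - X \<theta> \<omega>) \<longlonglongrightarrow> 0" by (simp add: tendsto_rabs_zero_iff)
    then have "(\<lambda>n. X (proj n \<theta>) \<omega>) \<longlonglongrightarrow> X \<theta> \<omega>" by (simp add: LIM_zero_iff)
    then show ?case using LIMSEQ_unique[OF Y_conv[OF elim(2) th]] by blast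
  qed
qed

lemma main_construct:
  "countable S \<and> S \<subseteq> \<Theta> \<and> (\<forall>\<theta>\<in>\<Theta>. \<forall>e>0. \<exists>t\<in>S. d t \<theta> < e)
   \<and> (\<forall>\<theta>\<in>\<Theta>. Y \<theta> \<in> borel_measurable M \<and> (AE \<omega> in M. Y \<theta> \<omega> = X \<theta> \<omega>))
   \<and> U \<in> borel_measurable M \<and> (\<forall>p>0. (\<integral>\<^sup>+\<omega>. ennreal (exp (p * U \<omega>)) \<partial>M) < \<infinity>)
   \<and> (AE \<omega> in M. uniformly_continuous_wrt \<Theta> d (\<lambda>\<theta>. Y \<theta> \<omega>) \<and> (\<forall>\<theta>\<in>\<Theta>. \<bar>Y \<theta> \<omega> - Y \<theta>0 \<omega>\<bar> \<le> U \<omega>))"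
proof (intro conjI S_countable S_sub ballI allI impI U_meas U_expmom Y_meas Y_ae)
  fix \<theta> :: 'b and e :: real assume th: "\<theta> \<in> \<Theta>" and e: "e > 0"
  obtain N where "\<forall>n\<ge>N. eps n < e" using eps_small[OF e] by auto
  then show "\<exists>t\<in>S. d t \<theta> < e" using proj[OF th, of N] proj_S[OF th, of N] by force
next
  show "AE \<omega> in M. uniformly_continuous_wrt \<Theta> d (\<lambda>\<theta>. Y \<theta> \<omega>) \<and> (\<forall>\<theta>\<in>\<Theta>. \<bar>Y \<theta> \<omega> - Y \<theta>0 \<omega>\<bar> \<le> U \<omega>)"
    using AE_Good by eventually_elim (auto intro: Y_uc Y_bound)
qed

end


lemma construct:
  fixes M :: "'a measure" and \<Theta> :: "'b set" and d :: "'b \<Rightarrow> 'b \<Rightarrow> real"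
    and X :: "'b \<Rightarrow> 'a \<Rightarrow> real"
  assumes prob: "prob_space M" and semi: "semimetric_on \<Theta> d" and tb: "totally_bounded_wrt \<Theta> d"
    and ns: "nearly_subgaussian M \<Theta> d X"
    and dud: "dudley_integral \<Theta> d (diameter_wrt \<Theta> d) < \<infinity>"
    and root: "\<theta>0 \<in> \<Theta>"
  shows "\<exists>Y U T. countable T \<and> T \<subseteq> \<Theta> \<and> (\<forall>\<theta>\<in>\<Theta>. \<forall>e>0. \<exists>t\<in>T. d t \<theta> < e)
   \<and> (\<forall>\<theta>\<in>\<Theta>. Y \<theta> \<in> borel_measurable M \<and> (AE \<omega> in M. Y \<theta> \<omega> = X \<theta> \<omega>))
   \<and> U \<in> borel_measurable M \<and> (\<forall>p>0. (\<integral>\<^sup>+\<omega>. ennreal (exp (p * U \<omega>)) \<partial>M) < \<infinity>)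
   \<and> (AE \<omega> in M. uniformly_continuous_wrt \<Theta> d (\<lambda>\<theta>. Y \<theta> \<omega>) \<and> (\<forall>\<theta>\<in>\<Theta>. \<bar>Y \<theta> \<omega> - Y \<theta>0 \<omega>\<bar> \<le> U \<omega>))"
proof -
  obtain C where C: "C \<ge> 1" and mgf: "\<And>\<theta> \<phi> l. \<theta> \<in> \<Theta> \<Longrightarrow> \<phi> \<in> \<Theta> \<Longrightarrow> l > 0 \<Longrightarrow>
        (\<integral>\<^sup>+ \<omega>. ennreal (exp (l * (X \<theta> \<omega> - X \<phi> \<omega>))) \<partial>M) \<le> ennreal (C * exp (l\<^sup>2 * (d \<theta> \<phi>)\<^sup>2 / 2))"
    using ns unfolding nearly_subgaussian_def by blast
  have Xm: "\<And>\<theta>. \<theta> \<in> \<Theta> \<Longrightarrow> X \<theta> \<in> borel_measurable M"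
    using ns unfolding nearly_subgaussian_def by (auto intro: borel_measurable_integrable)
  interpret dudley_setup M \<Theta> d X C \<theta>0
    by (rule dudley_setup.intro[OF prob semi tb Xm C mgf dud root])
  show ?thesis by (intro exI[of _ Y] exI[of _ U] exI[of _ S]) (rule main_construct)
qed

lemma transfer:
  fixes M :: "'a measure" and \<Theta> :: "'b set" and d :: "'b \<Rightarrow> 'b \<Rightarrow> real"
    and X Y Y' :: "'b \<Rightarrow> 'a \<Rightarrow> real"
  assumes Yae: "\<forall>\<theta>\<in>\<Theta>. AE \<omega> in M. Y \<theta> \<omega> = X \<theta> \<omega>"
    and Yuc: "AE \<omega> in M. uniformly_continuous_wrt \<Theta> d (\<lambda>\<theta>. Y \<theta> \<omega>)"
    and ver: "is_version M \<Theta> X Y'" and sep: "separable_field M \<Theta> d Y'"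
  shows "AE \<omega> in M. \<forall>\<theta>\<in>\<Theta>. Y' \<theta> \<omega> = Y \<theta> \<omega>"
proof -
  obtain T N where T: "countable T" "T \<subseteq> \<Theta>" "N \<in> null_sets M"
    and cl: "\<forall>\<omega>\<in>space M - N. \<forall>\<theta>\<in>\<Theta>. \<forall>\<epsilon>>0. Y' \<theta> \<omega> \<in> closure {Y' t \<omega> | t. t \<in> T \<and> d t \<theta> < \<epsilon>}"
    using sep unfolding separable_field_def by blast
  have a1: "AE \<omega> in M. \<forall>t\<in>T. Y' t \<omega> = X t \<omega>"
    using ver T unfolding is_version_def by (subst AE_ball_countable) auto
  have a2: "AE \<omega> in M. \<forall>t\<in>T. Y t \<omega> = X t \<omega>"
    using Yae T by (subst AE_ball_countable) auto
  have a3: "AE \<omega> in M. \<omega> \<notin> N" using T(3) by (rule AE_not_in)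
  show ?thesis using a1 a2 a3 Yuc AE_space
  proof eventually_elim
    case (elim \<omega>)
    show ?case
    proof
      fix \<theta> assume th: "\<theta> \<in> \<Theta>"
      have H: "\<bar>Y' \<theta> \<omega> - Y \<theta> \<omega>\<bar> \<le> 2 * r" if r: "r > 0" for r
      proof -
        obtain \<delta> where \<delta>: "\<delta> > 0" "\<forall>s\<in>\<Theta>. \<forall>t\<in>\<Theta>. d s t < \<delta> \<longrightarrow> \<bar>Y s \<omega> - Y t \<omega>\<bar> < r"
          using elim(4) r unfolding uniformly_continuous_wrt_def by blast
        have "Y' \<theta> \<omega> \<in> closure {Y' t \<omega> | t. t \<in> T \<and> d t \<theta> < \<delta>}"
          using cl elim(3,5) th \<delta>(1) by blast
        then obtain y where y: "y \<in> {Y' t \<omega> | t. t \<in> T \<and> d t \<theta> < \<delta>}" "dist y (Y' \<theta> \<omega>) < r"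
          using r unfolding closure_approachable by blast
        then obtain t where t: "t \<in> T" "d t \<theta> < \<delta>" "y = Y' t \<omega>" by blast
        have tT: "t \<in> \<Theta>" using t T(2) by blast
        have "Y' t \<omega> = Y t \<omega>" using elim(1,2) t(1) by simp
        moreover have "\<bar>Y t \<omega> - Y \<theta> \<omega>\<bar> < r" using \<delta>(2) tT th t(2) by blast
        ultimately show ?thesis using y(2) t(3) by (simp add: dist_real_def)
      qed
      have "\<bar>Y' \<theta> \<omega> - Y \<theta> \<omega>\<bar> \<le> 0 + e" if "e > 0" for e
        using H[of "e/2"] that by simp
      then have "\<bar>Y' \<theta> \<omega> - Y \<theta> \<omega>\<bar> \<le> 0" by (rule field_le_epsilon)
      then show "Y' \<theta> \<omega> = Y \<theta> \<omega>" by simp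
    qed
  qed
qed


theorem propositionA2:
  fixes M :: "'a measure" and \<Theta> :: "'b set" and d :: "'b \<Rightarrow> 'b \<Rightarrow> real"
    and X :: "'b \<Rightarrow> 'a \<Rightarrow> real"
  assumes "prob_space M"
    and "semimetric_on \<Theta> d"
    and "totally_bounded_wrt \<Theta> d"
    and "nearly_subgaussian M \<Theta> d X"
    and "dudley_integral \<Theta> d (diameter_wrt \<Theta> d) < \<infinity>"
  shows "(\<exists>Y. is_version M \<Theta> X Y \<and> separable_field M \<Theta> d Y)
    \<and> (\<forall>Y. is_version M \<Theta> X Y \<and> separable_field M \<Theta> d Y \<longrightarrow>
          (AE \<omega> in M. bdd_above ((\<lambda>\<theta>. \<bar>Y \<theta> \<omega>\<bar>) ` \<Theta>)
                      \<and> uniformly_continuous_wrt \<Theta> d (\<lambda>\<theta>. Y \<theta> \<omega>)))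
    \<and> (\<forall>Y. is_version M \<Theta> X Y \<and> separable_field M \<Theta> d Y \<longrightarrow>
          (\<forall>\<theta>0\<in>\<Theta>. \<exists>U. U \<in> borel_measurable M
              \<and> (AE \<omega> in M. \<forall>\<theta>\<in>\<Theta>. Y \<theta> \<omega> \<le> U \<omega> + Y \<theta>0 \<omega>)
              \<and> (\<forall>p>0. (\<integral>\<^sup>+ \<omega>. ennreal (exp (p * U \<omega>)) \<partial>M) < \<infinity>)))"
proof (cases "\<Theta> = {}")
  case True
  have sep: "separable_field M \<Theta> d X" unfolding separable_field_def using True
    by (intro exI[of _ "{}"]) auto
  have ver: "is_version M \<Theta> X X" unfolding is_version_def using True by auto
  have uc: "uniformly_continuous_wrt \<Theta> d f" for f :: "'b \<Rightarrow> real"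
    unfolding uniformly_continuous_wrt_def using True by (auto intro: exI[of _ 1])
  show ?thesis
  proof (intro conjI allI impI ballI)
    show "\<exists>Y. is_version M \<Theta> X Y \<and> separable_field M \<Theta> d Y" using sep ver by blast
  next
    fix Y' :: "'b \<Rightarrow> 'a \<Rightarrow> real"
    show "AE \<omega> in M. bdd_above ((\<lambda>\<theta>. \<bar>Y' \<theta> \<omega>\<bar>) ` \<Theta>) \<and> uniformly_continuous_wrt \<Theta> d (\<lambda>\<theta>. Y' \<theta> \<omega>)"
      using uc True by (intro AE_I2) simp
  next
    fix Y' :: "'b \<Rightarrow> 'a \<Rightarrow> real" and \<theta>0
    assume "\<theta>0 \<in> \<Theta>"
    then show "\<exists>U. U \<in> borel_measurable M \<and> (AE \<omega> in M. \<forall>\<theta>\<in>\<Theta>. Y' \<theta> \<omega> \<le> U \<omega> + Y' \<theta>0 \<omega>)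
              \<and> (\<forall>p>0. (\<integral>\<^sup>+ \<omega>. ennreal (exp (p * U \<omega>)) \<partial>M) < \<infinity>)" using True by simp
  qed
next
  case False
  then obtain \<theta>1 where th1: "\<theta>1 \<in> \<Theta>" by blast
  note cons = construct[OF assms]
  obtain Y U T where T: "countable T" "T \<subseteq> \<Theta>" and dense: "\<forall>\<theta>\<in>\<Theta>. \<forall>e>0. \<exists>t\<in>T. d t \<theta> < e"
    and Yv: "\<forall>\<theta>\<in>\<Theta>. Y \<theta> \<in> borel_measurable M \<and> (AE \<omega> in M. Y \<theta> \<omega> = X \<theta> \<omega>)"
    and Uae: "AE \<omega> in M. uniformly_continuous_wrt \<Theta> d (\<lambda>\<theta>. Y \<theta> \<omega>) \<and> (\<forall>\<theta>\<in>\<Theta>. \<bar>Y \<theta> \<omega> - Y \<theta>1 \<omega>\<bar> \<le> U \<omega>)"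
    using cons[OF th1] by (elim exE conjE) (rule that; assumption)
  have ver: "is_version M \<Theta> X Y" using Yv by (simp add: is_version_def)
  have sep: "separable_field M \<Theta> d Y"
  proof -
    obtain N where N: "{\<omega> \<in> space M. \<not> (uniformly_continuous_wrt \<Theta> d (\<lambda>\<theta>. Y \<theta> \<omega>) \<and> (\<forall>\<theta>\<in>\<Theta>. \<bar>Y \<theta> \<omega> - Y \<theta>1 \<omega>\<bar> \<le> U \<omega>))} \<subseteq> N"
      "emeasure M N = 0" "N \<in> sets M"
      using Uae by (rule AE_E)
    have "Y \<theta> \<omega> \<in> closure {Y t \<omega> | t. t \<in> T \<and> d t \<theta> < \<epsilon>}"
      if \<omega>: "\<omega> \<in> space M - N" and th: "\<theta> \<in> \<Theta>" and \<epsilon>: "\<epsilon> > 0" for \<omega> \<theta> \<epsilon>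
    proof -
      have ucw: "uniformly_continuous_wrt \<Theta> d (\<lambda>\<theta>. Y \<theta> \<omega>)" using N(1) \<omega> by blast
      show ?thesis unfolding closure_approachable
      proof (intro allI impI)
        fix r :: real assume r: "r > 0"
        obtain \<delta> where \<delta>: "\<delta> > 0" "\<forall>s\<in>\<Theta>. \<forall>t\<in>\<Theta>. d s t < \<delta> \<longrightarrow> \<bar>Y s \<omega> - Y t \<omega>\<bar> < r"
          using ucw r unfolding uniformly_continuous_wrt_def by blast
        obtain t where t: "t \<in> T" "d t \<theta> < min \<epsilon> \<delta>" using dense th \<epsilon> \<delta>(1) by (meson min_less_iff_conj)
        have tT: "t \<in> \<Theta>" using t T(2) by blast
        have "\<bar>Y t \<omega> - Y \<theta> \<omega>\<bar> < r" using \<delta>(2) tT th t(2) by simp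
        moreover have "Y t \<omega> \<in> {Y t \<omega> | t. t \<in> T \<and> d t \<theta> < \<epsilon>}" using t by auto
        ultimately show "\<exists>y\<in>{Y t \<omega> | t. t \<in> T \<and> d t \<theta> < \<epsilon>}. dist y (Y \<theta> \<omega>) < r"
          by (auto simp: dist_real_def)
      qed
    qed
    moreover have "N \<in> null_sets M" using N by auto
    ultimately show ?thesis unfolding separable_field_def using T by (intro exI[of _ T] exI[of _ N]) auto
  qed
  have part2: "AE \<omega> in M. bdd_above ((\<lambda>\<theta>. \<bar>Y' \<theta> \<omega>\<bar>) ` \<Theta>) \<and> uniformly_continuous_wrt \<Theta> d (\<lambda>\<theta>. Y' \<theta> \<omega>)"
    if v': "is_version M \<Theta> X Y'" and s': "separable_field M \<Theta> d Y'" for Y'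
  proof -
    have tr: "AE \<omega> in M. \<forall>\<theta>\<in>\<Theta>. Y' \<theta> \<omega> = Y \<theta> \<omega>"
      by (rule transfer[OF _ _ v' s']) (use Yv Uae in auto)
    show ?thesis using tr Uae
    proof eventually_elim
      case (elim \<omega>)
      have "bdd_above ((\<lambda>\<theta>. \<bar>Y' \<theta> \<omega>\<bar>) ` \<Theta>)"
      proof (rule bdd_aboveI2)
        fix \<theta> assume th: "\<theta> \<in> \<Theta>"
        have "\<bar>Y \<theta> \<omega> - Y \<theta>1 \<omega>\<bar> \<le> U \<omega>" using elim(2) th by blast
        then show "\<bar>Y' \<theta> \<omega>\<bar> \<le> U \<omega> + \<bar>Y \<theta>1 \<omega>\<bar>" using elim(1) th by simp
      qed
      moreover have "uniformly_continuous_wrt \<Theta> d (\<lambda>\<theta>. Y' \<theta> \<omega>)"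
        using elim unfolding uniformly_continuous_wrt_def by simp
      ultimately show ?case by blast
    qed
  qed
  have part3: "\<exists>U. U \<in> borel_measurable M \<and> (AE \<omega> in M. \<forall>\<theta>\<in>\<Theta>. Y' \<theta> \<omega> \<le> U \<omega> + Y' \<theta>0 \<omega>)
              \<and> (\<forall>p>0. (\<integral>\<^sup>+ \<omega>. ennreal (exp (p * U \<omega>)) \<partial>M) < \<infinity>)"
    if v': "is_version M \<Theta> X Y'" and s': "separable_field M \<Theta> d Y'" and th0: "\<theta>0 \<in> \<Theta>" for Y' \<theta>0
  proof -
    obtain Y0 U0 T0 where
      Yv0: "\<forall>\<theta>\<in>\<Theta>. Y0 \<theta> \<in> borel_measurable M \<and> (AE \<omega> in M. Y0 \<theta> \<omega> = X \<theta> \<omega>)"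
      and U0m: "U0 \<in> borel_measurable M" and U0e: "\<forall>p>0. (\<integral>\<^sup>+\<omega>. ennreal (exp (p * U0 \<omega>)) \<partial>M) < \<infinity>"
      and Uae0: "AE \<omega> in M. uniformly_continuous_wrt \<Theta> d (\<lambda>\<theta>. Y0 \<theta> \<omega>) \<and> (\<forall>\<theta>\<in>\<Theta>. \<bar>Y0 \<theta> \<omega> - Y0 \<theta>0 \<omega>\<bar> \<le> U0 \<omega>)"
      using cons[OF th0] by (elim exE conjE) (rule that; assumption)
    have tr: "AE \<omega> in M. \<forall>\<theta>\<in>\<Theta>. Y' \<theta> \<omega> = Y0 \<theta> \<omega>"
      by (rule transfer[OF _ _ v' s']) (use Yv0 Uae0 in auto)
    have "AE \<omega> in M. \<forall>\<theta>\<in>\<Theta>. Y' \<theta> \<omega> \<le> U0 \<omega> + Y' \<theta>0 \<omega>"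
      using tr Uae0
    proof eventually_elim
      case (elim \<omega>)
      show ?case
      proof
        fix \<theta> assume th: "\<theta> \<in> \<Theta>"
        have "\<bar>Y0 \<theta> \<omega> - Y0 \<theta>0 \<omega>\<bar> \<le> U0 \<omega>" using elim(2) th by blast
        then show "Y' \<theta> \<omega> \<le> U0 \<omega> + Y' \<theta>0 \<omega>" using elim(1) th th0 by simp
      qed
    qed
    then show ?thesis using U0m U0e by blast
  qed
  show ?thesis
  proof (intro conjI allI impI ballI)
    show "\<exists>Y. is_version M \<Theta> X Y \<and> separable_field M \<Theta> d Y" using sep ver by blast
  next
    fix Y' :: "'b \<Rightarrow> 'a \<Rightarrow> real"
    assume "is_version M \<Theta> X Y' \<and> separable_field M \<Theta> d Y'"
    then show "AE \<omega> in M. bdd_above ((\<lambda>\<theta>. \<bar>Y' \<theta> \<omega>\<bar>) ` \<Theta>) \<and> uniformly_continuous_wrt \<Theta> d (\<lambda>\<theta>. Y' \<theta> \<omega>)"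
      using part2 by blast
  next
    fix Y' :: "'b \<Rightarrow> 'a \<Rightarrow> real" and \<theta>0
    assume "is_version M \<Theta> X Y' \<and> separable_field M \<Theta> d Y'" "\<theta>0 \<in> \<Theta>"
    then show "\<exists>U. U \<in> borel_measurable M \<and> (AE \<omega> in M. \<forall>\<theta>\<in>\<Theta>. Y' \<theta> \<omega> \<le> U \<omega> + Y' \<theta>0 \<omega>)
              \<and> (\<forall>p>0. (\<integral>\<^sup>+ \<omega>. ennreal (exp (p * U \<omega>)) \<partial>M) < \<infinity>)"
      using part3 by blast
  qed
qed


end
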